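(* The polynomials $S_n(x,q)$ satisfy $$S_{n+1}(x,q)=(q+nx)S_n(x,q)+x(1-2x)\frac{\partial}{\partial x}S_n(x,q)\quad(n\ge0),$$ with $S_0(x,q)=1$. Furthermore, $$\sum_{n\ge0}S_n(x,q)\frac{z^n}{n!}=S(x,z)^q.$$
   Context: Permutations of $[n]=\{1,\dots,n\}$ are written in standard cycle decomposition (each cycle starts with its smallest element, cycles in increasing order of smallest elements). $\pi$ has an excedance at $i$ if $\pi(i)>i$; ${\rm exc}(\pi)$ is the number of excedances, ${\rm cyc}(\pi)$ the number of cycles. A value $x$ is a double excedance of $\pi$ if $\pi^{-1}(x)<x<\pi(x)$. A permutation $\pi$ of $[n]$ is a simsun permutation of the second kind if for every $k\in\{0,1,\dots,n\}$, deleting the $k$ largest letters from the cycle decomposition of $\pi$ yields a permutation with no double excedances; $\mathcal{SS}_n$ is the set of these, and $S_n(x,q)=\sum_{\pi\in\mathcal{SS}_n}x^{{\rm exc}(\pi)}q^{{\rm cyc}(\pi)}$. In one-line notation, ${\rm des}(\pi)=\#\{i\in[n-1]:\pi(i)>\pi(i+1)\}$, a double descent is an index $i$ with $\pi(i)>\pi(i+1)>\pi(i+2)$, and $\pi$ is (first-kind) simsun if for every $k\in[n]$ the subword of letters in $[k]$ has no double descents; with $\mathcal{RS}_n$ their set, $S_n(x)=\sum_{\pi\in\mathcal{RS}_n}x^{{\rm des}(\pi)}$, $S_0(x)=1$, and $S(x,z)=\sum_{n\ge0}S_n(x)\frac{z^n}{n!}$. *)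

theory Defs
  imports "HOL-Computational_Algebra.Computational_Algebra" "HOL-Combinatorics.Permutations"
begin

text \<open>Permutation of [m] obtained from p (a permutation of [n], m \<le> n) by deleting
  the letters greater than m from its cycle decomposition: each i \<le> m is sent to
  the first element \<le> m that follows it along its cycle.\<close>
definition del_large :: "(nat \<Rightarrow> nat) \<Rightarrow> nat \<Rightarrow> nat \<Rightarrow> nat" where
  "del_large p m i = (p ^^ (LEAST j. j > 0 \<and> (p ^^ j) i \<le> m)) i"

definition no_double_exc :: "nat \<Rightarrow> (nat \<Rightarrow> nat) \<Rightarrow> bool" where
  "no_double_exc m sigma \<longleftrightarrow>
     \<not> (\<exists>x\<in>{1..m}. \<exists>y\<in>{1..m}. sigma y = x \<and> y < x \<and> x < sigma x)"

definition simsun2 :: "nat \<Rightarrow> (nat \<Rightarrow> nat) \<Rightarrow> bool" where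
  "simsun2 n p \<longleftrightarrow> (\<forall>k\<in>{0..n}. no_double_exc (n - k) (del_large p (n - k)))"

definition SS :: "nat \<Rightarrow> (nat \<Rightarrow> nat) set" where
  "SS n = {p. p permutes {1..n} \<and> simsun2 n p}"

definition exc :: "nat \<Rightarrow> (nat \<Rightarrow> nat) \<Rightarrow> nat" where
  "exc n p = card {i\<in>{1..n}. p i > i}"

definition cyc :: "nat \<Rightarrow> (nat \<Rightarrow> nat) \<Rightarrow> nat" where
  "cyc n p = card ((\<lambda>i. {(p ^^ k) i | k. True}) ` {1..n})"

text \<open>S_n(x,q) as a polynomial in q whose coefficients are polynomials in x.\<close>
definition S2 :: "nat \<Rightarrow> real poly poly" where
  "S2 n = (\<Sum>p\<in>SS n. monom (monom 1 (exc n p)) (cyc n p))"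

definition oneline :: "nat \<Rightarrow> (nat \<Rightarrow> nat) \<Rightarrow> nat list" where
  "oneline n p = map p [1..<n+1]"

definition has_double_descent :: "nat list \<Rightarrow> bool" where
  "has_double_descent w \<longleftrightarrow> (\<exists>i. i + 2 < length w \<and> w ! i > w ! (i+1) \<and> w ! (i+1) > w ! (i+2))"

definition RS :: "nat \<Rightarrow> (nat \<Rightarrow> nat) set" where
  "RS n = {p. p permutes {1..n} \<and>
     (\<forall>k\<in>{1..n}. \<not> has_double_descent (filter (\<lambda>v. v \<le> k) (oneline n p)))}"

definition des :: "nat \<Rightarrow> (nat \<Rightarrow> nat) \<Rightarrow> nat" where
  "des n p = card {i\<in>{1..n-1}. p i > p (i+1)}"

definition S1 :: "nat \<Rightarrow> real poly" where
  "S1 n = (\<Sum>p\<in>RS n. monom 1 (des n p))"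

text \<open>S(x,z) for a fixed real x, as a formal power series in z.\<close>
definition S_egf :: "real \<Rightarrow> real fps" where
  "S_egf x = Abs_fps (\<lambda>n. poly (S1 n) x / fact n)"

text \<open>Formal power (1 + (F - 1))^q, for F with constant term 1.\<close>
definition fps_pow_real :: "real fps \<Rightarrow> real \<Rightarrow> real fps" where
  "fps_pow_real F q = fps_binomial q oo (F - 1)"

end

theory Submission imports Defs "HOL-Combinatorics.Multiset_Permutations" begin


definition Lop :: "real poly \<Rightarrow> real poly" where
  "Lop p = [:0,1,-2:] * pderiv p"

lemma Lop_add: "Lop (p + q) = Lop p + Lop q"
  by (simp only: Lop_def pderiv_add distrib_left)

lemma Lop_mult: "Lop (p * q) = Lop p * q + p * Lop q"
  by (simp add: Lop_def pderiv_mult algebra_simps)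

lemma Lop_0[simp]: "Lop 0 = 0" by (simp add: Lop_def)
lemma Lop_1[simp]: "Lop 1 = 0" by (simp add: Lop_def)

lemma ring_aux: "((A::'a::comm_ring)*u + lu)*v + u*(B*v + lv) = (A+B)*(u*v) + (lu*v + u*lv)"
  by (simp add: algebra_simps)

lemma Lop_sum: "Lop (\<Sum>k\<in>A. f k) = (\<Sum>k\<in>A. Lop (f k))"
  by (induction A rule: infinite_finite_induct) (auto simp: Lop_add)


lemma Lop_of_nat_mult: "Lop (of_nat c * p) = of_nat c * Lop p"
  by (simp add: Lop_def pderiv_mult algebra_simps)

definition recur :: "real \<Rightarrow> (nat \<Rightarrow> real poly) \<Rightarrow> bool" where
  "recur a U \<longleftrightarrow> (\<forall>n. U (Suc n) = [:a, of_nat n:] * U n + Lop (U n))"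

lemma recur_unique:
  assumes "recur a U" "recur a V" "U 0 = V 0"
  shows "U n = V n"
  using assms by (induction n) (auto simp: recur_def)

definition conv :: "(nat \<Rightarrow> real poly) \<Rightarrow> (nat \<Rightarrow> real poly) \<Rightarrow> nat \<Rightarrow> real poly" where
  "conv U V n = (\<Sum>k\<le>n. of_nat (n choose k) * U k * V (n-k))"

lemma pascal_sum:
  fixes g :: "nat \<Rightarrow> nat \<Rightarrow> 'a::comm_ring_1"
  shows "(\<Sum>k\<le>Suc n. of_nat (Suc n choose k) * g k (Suc n - k))
       = (\<Sum>k\<le>n. of_nat (n choose k) * (g (Suc k) (n-k) + g k (Suc (n-k))))"
proof -
  have "(\<Sum>k\<le>Suc n. of_nat (Suc n choose k) * g k (Suc n - k))
      = g 0 (Suc n) + (\<Sum>k\<le>n. of_nat (Suc n choose Suc k) * g (Suc k) (n - k))"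
    by (subst sum.atMost_Suc_shift) simp
  also have "\<dots> = g 0 (Suc n) + (\<Sum>k\<le>n. of_nat (n choose k) * g (Suc k) (n - k))
       + (\<Sum>k\<le>n. of_nat (n choose Suc k) * g (Suc k) (n - k))"
    by (simp add: sum.distrib algebra_simps)
  also have "g 0 (Suc n) + (\<Sum>k\<le>n. of_nat (n choose Suc k) * g (Suc k) (n - k))
      = (\<Sum>k\<le>n. of_nat (n choose k) * g k (Suc (n - k)))"
  proof -
    have "(\<Sum>k\<le>n. of_nat (n choose k) * g k (Suc (n - k)))
        = (\<Sum>k\<le>Suc n. of_nat (n choose k) * g k (Suc n - k))"
      by (simp add: Suc_diff_le binomial_eq_0)
    also have "\<dots> = g 0 (Suc n) + (\<Sum>k\<le>n. of_nat (n choose Suc k) * g (Suc k) (n - k))"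
      by (subst sum.atMost_Suc_shift) simp
    finally show ?thesis by simp
  qed
  ultimately show ?thesis by (simp add: sum.distrib algebra_simps)
qed

lemma conv_recur:
  assumes U: "recur a U" and V: "recur b V"
  shows "recur (a+b) (conv U V)"
  unfolding recur_def
proof
  fix n
  have "conv U V (Suc n) = (\<Sum>k\<le>n. of_nat (n choose k) * (U (Suc k) * V (n-k) + U k * V (Suc (n-k))))"
    unfolding conv_def using pascal_sum[where g="\<lambda>i j. U i * V j" and n=n]
    by (simp add: mult.assoc)
  also have "\<dots> = (\<Sum>k\<le>n. of_nat (n choose k) * ([:a+b, of_nat n:] * (U k * V (n-k)) + Lop (U k * V (n-k))))"
  proof (rule sum.cong[OF refl])
    fix k assume "k \<in> {..n}"
    hence kn: "k \<le> n" by simp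
    have e: "[:a, of_nat k:] + [:b, of_nat (n-k):] = [:a+b, of_nat n:]"
      using kn by (simp add: of_nat_diff)
    have "U (Suc k) * V (n-k) + U k * V (Suc (n-k))
      = ([:a, of_nat k:] + [:b, of_nat (n-k):]) * (U k * V (n-k)) + Lop (U k * V (n-k))"
      using U V unfolding recur_def by (simp only: Lop_mult ring_aux)
    then show "of_nat (n choose k) * (U (Suc k) * V (n-k) + U k * V (Suc (n-k)))
      = of_nat (n choose k) * ([:a+b, of_nat n:] * (U k * V (n-k)) + Lop (U k * V (n-k)))"
      by (simp only: e)
  qed
  also have "\<dots> = [:a+b, of_nat n:] * conv U V n + Lop (conv U V n)"
  proof -
    have "Lop (conv U V n) = (\<Sum>k\<le>n. of_nat (n choose k) * Lop (U k * V (n-k)))"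
      unfolding conv_def Lop_sum by (simp add: mult.assoc Lop_of_nat_mult)
    moreover have "[:a+b, of_nat n:] * conv U V n = (\<Sum>k\<le>n. of_nat (n choose k) * ([:a+b, of_nat n:] * (U k * V (n-k))))"
      unfolding conv_def sum_distrib_left by (simp add: algebra_simps)
    ultimately show ?thesis by (simp add: sum.distrib distrib_left)
  qed
  finally show "conv U V (Suc n) = [:a+b, of_nat n:] * conv U V n + Lop (conv U V n)" .
qed

lemma poly_map_pderiv: "poly (map_poly pderiv P) [:c:] = pderiv (poly P [:c:])"
  by (induction P rule: pCons_induct) (simp_all add: map_poly_pCons pderiv_add pderiv_mult pderiv_pCons pderiv_smult)

lemma poly_poly_map: "poly (poly P [:q:]) x = poly (map_poly (\<lambda>c. poly c x) P) (q::real)"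
  by (induction P rule: pCons_induct) (simp_all add: map_poly_pCons)

definition Bq :: "real \<Rightarrow> nat \<Rightarrow> real poly" where
  "Bq c n = poly (S2 n) [:c:]"

lemma recur_Bq:
  assumes "\<forall>n. S2 (Suc n) = ([:0, 1:] + [:[:0, of_nat n:]:]) * S2 n
                         + [:[:0, 1, -2:]:] * map_poly pderiv (S2 n)"
  shows "recur c (Bq c)"
  unfolding recur_def Bq_def
proof
  fix n
  show "poly (S2 (Suc n)) [:c:] = [:c, of_nat n:] * poly (S2 n) [:c:] + Lop (poly (S2 n) [:c:])"
    using assms by (simp add: poly_map_pderiv Lop_def)
qed

lemma recur_zero: "recur 0 (\<lambda>n. if n = 0 then 1 else 0)"
  unfolding recur_def by simp

lemma conv_0: "conv U V 0 = U 0 * V 0"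
  by (simp add: conv_def)

lemma conv_fps:
  "Abs_fps (\<lambda>n. poly (conv U V n) x / fact n)
     = Abs_fps (\<lambda>n. poly (U n) x / fact n) * Abs_fps (\<lambda>n. poly (V n) (x::real) / fact n)"
proof (rule fps_ext)
  fix n
  have "poly (conv U V n) x / fact n = (\<Sum>k\<le>n. of_nat (n choose k) * poly (U k) x * poly (V (n-k)) x / fact n)"
    by (simp add: conv_def poly_sum sum_divide_distrib)
  also have "\<dots> = (\<Sum>k\<le>n. (poly (U k) x / fact k) * (poly (V (n-k)) x / fact (n-k)))"
  proof (rule sum.cong[OF refl])
    fix k assume "k \<in> {..n}"
    hence "k \<le> n" by simp
    then show "of_nat (n choose k) * poly (U k) x * poly (V (n-k)) x / fact n
       = (poly (U k) x / fact k) * (poly (V (n-k)) x / fact (n-k))"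
      by (simp add: binomial_fact field_simps)
  qed
  finally show "Abs_fps (\<lambda>n. poly (conv U V n) x / fact n) $ n =
    (Abs_fps (\<lambda>n. poly (U n) x / fact n) * Abs_fps (\<lambda>n. poly (V n) x / fact n)) $ n"
    by (simp add: fps_mult_nth atLeast0AtMost)
qed

lemma fps_pow_real_nat:
  assumes "F $ 0 = 1"
  shows "fps_pow_real F (of_nat m) = F ^ m"
proof -
  have "fps_pow_real F (of_nat m) = (1 + fps_X) ^ m oo (F - 1)"
    by (simp add: fps_pow_real_def fps_binomial_of_nat)
  also have "\<dots> = ((1 + fps_X) oo (F - 1)) ^ m"
    by (rule fps_compose_power[symmetric]) (simp add: assms)
  also have "(1 + fps_X) oo (F - 1) = F"
    using assms by (simp add: fps_compose_add_distrib)
  finally show ?thesis .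
qed

lemma gchoose_poly: "\<exists>P. \<forall>q::real. q gchoose i = poly P q"
proof -
  define P :: "real poly" where "P = (\<Prod>j\<in>{0..<i}. smult (1 / of_nat (i - j)) [:- of_nat j, 1:])"
  have "q gchoose i = poly P q" for q
    unfolding gbinomial_altdef_of_nat P_def poly_prod by (intro prod.cong refl) (simp add: divide_inverse algebra_simps)
  then show ?thesis by blast
qed

lemma eq_poly_from_nat:
  fixes f g :: "real \<Rightarrow> real"
  assumes "\<exists>P. \<forall>q. f q = poly P q" "\<exists>P. \<forall>q. g q = poly P q" "\<And>m::nat. f (of_nat m) = g (of_nat m)"
  shows "f q = g q"
proof -
  obtain P Q where P: "\<And>q. f q = poly P q" and Q: "\<And>q. g q = poly Q q" using assms(1,2) by blast
  have "P - Q = 0"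
  proof (rule ccontr)
    assume "P - Q \<noteq> 0"
    then have "finite {q. poly (P - Q) q = 0}" by (rule poly_roots_finite)
    moreover have "range (of_nat :: nat \<Rightarrow> real) \<subseteq> {q. poly (P - Q) q = 0}"
      using assms(3) P Q by auto
    moreover have "infinite (range (of_nat :: nat \<Rightarrow> real))"
      using range_inj_infinite[of "of_nat :: nat \<Rightarrow> real"] by (simp add: inj_on_def)
    ultimately show False using finite_subset by blast
  qed
  then show ?thesis using P Q by simp
qed

lemma S_egf_0: "S1 0 = 1 \<Longrightarrow> S_egf x $ 0 = 1"
  by (simp add: S_egf_def)

lemma part_egf:
  assumes R1: "S1 0 = 1" "recur 1 S1"
    and R2: "S2 0 = 1" "\<forall>n. S2 (Suc n) = ([:0, 1:] + [:[:0, of_nat n:]:]) * S2 n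
                         + [:[:0, 1, -2:]:] * map_poly pderiv (S2 n)"
  shows "Abs_fps (\<lambda>n. poly (poly (S2 n) [:q:]) x / fact n) = fps_pow_real (S_egf x) q"
proof -
  have recB: "recur c (Bq c)" for c using recur_Bq[OF R2(2)] .
  have B0: "Bq c 0 = 1" for c using R2(1) by (simp add: Bq_def)
  have Bzero: "Bq 0 n = (if n = 0 then 1 else 0)" for n
    by (rule recur_unique[OF recB recur_zero]) (simp add: B0)
  have Bsuc: "Bq (of_nat (Suc m)) n = conv (Bq (of_nat m)) S1 n" for m n
  proof (rule recur_unique[OF recB])
    show "recur (of_nat (Suc m)) (conv (Bq (of_nat m)) S1)"
      using conv_recur[OF recB R1(2), of "of_nat m"] by (simp add: add.commute)
    show "Bq (of_nat (Suc m)) 0 = conv (Bq (of_nat m)) S1 0"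
      by (simp add: conv_0 B0 R1(1))
  qed
  have nat_case: "Abs_fps (\<lambda>n. poly (Bq (of_nat m) n) x / fact n) = S_egf x ^ m" for m
  proof (induction m)
    case 0
    show ?case by (rule fps_ext) (simp add: Bzero)
  next
    case (Suc m)
    show ?case unfolding Bsuc conv_fps Suc
      by (simp add: S_egf_def mult.commute)
  qed
  show ?thesis
  proof (rule fps_ext)
    fix n
    let ?F = "S_egf x"
    have coef: "fps_pow_real ?F q $ n = (\<Sum>i=0..n. (q gchoose i) * ((?F - 1)^i $ n))" for q
      by (simp add: fps_pow_real_def fps_compose_nth)
    have "poly (poly (S2 n) [:q:]) x / fact n = fps_pow_real ?F q $ n"
    proof (rule eq_poly_from_nat[where f = "\<lambda>q. poly (poly (S2 n) [:q:]) x / fact n"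
          and g = "\<lambda>q. fps_pow_real ?F q $ n"])
      show "\<exists>P. \<forall>q. poly (poly (S2 n) [:q:]) x / fact n = poly P q"
        by (rule exI[of _ "smult (1 / fact n) (map_poly (\<lambda>c. poly c x) (S2 n))"])
           (simp add: poly_poly_map)
      have ex: "\<forall>i. \<exists>P. \<forall>q::real. q gchoose i = poly P q" using gchoose_poly by blast
      obtain G where G0: "\<forall>i (q::real). q gchoose i = poly (G i) q" using choice[OF ex] by blast
      have G: "\<And>i (q::real). q gchoose i = poly (G i) q" using G0 by blast
      show "\<exists>P. \<forall>q. fps_pow_real ?F q $ n = poly P q"
        by (rule exI[of _ "\<Sum>i=0..n. smult ((?F - 1)^i $ n) (G i)"])
           (simp add: coef G poly_sum mult.commute)
      fix m :: nat
      have "poly (poly (S2 n) [:of_nat m:]) x / fact n = S_egf x ^ m $ n"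
        using arg_cong[OF nat_case[of m], of "\<lambda>f. f $ n"] by (simp add: Bq_def)
      also have "\<dots> = fps_pow_real ?F (of_nat m) $ n"
        by (simp add: fps_pow_real_nat S_egf_0 R1(1))
      finally show "poly (poly (S2 n) [:of_nat m:]) x / fact n = fps_pow_real ?F (of_nat m) $ n" .
    qed
    then show "Abs_fps (\<lambda>n. poly (poly (S2 n) [:q:]) x / fact n) $ n = fps_pow_real ?F q $ n"
      by simp
  qed
qed



definition Lm :: "(nat \<Rightarrow> nat) \<Rightarrow> nat \<Rightarrow> nat \<Rightarrow> nat" where
  "Lm f m i = (LEAST j. 0 < j \<and> (f ^^ j) i \<le> m)"

lemma dl_Lm: "del_large f m i = (f ^^ Lm f m i) i"
  by (simp add: del_large_def Lm_def)

lemma Lm_prop: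
  assumes "\<exists>j>0. (f ^^ j) i \<le> m"
  shows "0 < Lm f m i \<and> (f ^^ Lm f m i) i \<le> m"
  using LeastI_ex[OF assms] unfolding Lm_def .

lemma Lm_le:
  assumes "0 < j" "(f ^^ j) i \<le> m"
  shows "Lm f m i \<le> j"
  unfolding Lm_def by (rule Least_le) (use assms in simp)

lemma dl_here:
  assumes "f i \<le> m"
  shows "del_large f m i = f i" "Lm f m i = 1"
proof -
  show L: "Lm f m i = 1"
    unfolding Lm_def by (rule Least_equality) (use assms in auto)
  show "del_large f m i = f i" by (simp add: dl_Lm L)
qed

lemma dl_step:
  assumes ex: "\<exists>j>0. (f ^^ j) i \<le> m" and big: "\<not> f i \<le> m"
  shows "\<exists>j>0. (f ^^ j) (f i) \<le> m" "Lm f m i = Suc (Lm f m (f i))"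
    "del_large f m i = del_large f m (f i)"
proof -
  obtain J where J: "0 < J" "(f ^^ J) i \<le> m" using ex by blast
  have "J \<noteq> 1" using J big by auto
  then obtain J' where J': "J = Suc J'" "0 < J'" using J by (cases J) auto
  have fJ: "(f ^^ J') (f i) \<le> m" using J J' by (simp add: funpow_Suc_right del: funpow.simps)
  show ex2: "\<exists>j>0. (f ^^ j) (f i) \<le> m" using fJ J' by blast
  have P: "0 < Lm f m (f i)" "(f ^^ Lm f m (f i)) (f i) \<le> m" using Lm_prop[OF ex2] by auto
  show L: "Lm f m i = Suc (Lm f m (f i))"
  proof (rule antisym)
    show "Lm f m i \<le> Suc (Lm f m (f i))"
      by (rule Lm_le) (use P in \<open>simp_all add: funpow_Suc_right del: funpow.simps\<close>)
    have P2: "0 < Lm f m i" "(f ^^ Lm f m i) i \<le> m" using Lm_prop[OF ex] by auto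
    have "Lm f m i \<noteq> 1" using P2 big by auto
    then obtain k where k: "Lm f m i = Suc k" "0 < k" using P2 by (cases "Lm f m i") auto
    have "(f ^^ k) (f i) \<le> m" using P2 k by (simp add: funpow_Suc_right del: funpow.simps)
    then have "Lm f m (f i) \<le> k" using k by (intro Lm_le) auto
    then show "Suc (Lm f m (f i)) \<le> Lm f m i" using k by simp
  qed
  show "del_large f m i = del_large f m (f i)"
    by (simp add: dl_Lm L funpow_Suc_right del: funpow.simps)
qed

definition insf :: "(nat \<Rightarrow> nat) \<Rightarrow> nat \<Rightarrow> nat \<Rightarrow> nat \<Rightarrow> nat" where
  "insf \<pi> c N = (\<lambda>x. if x = c then N else if x = N then \<pi> c else \<pi> x)"

lemma dl_insf:
  fixes \<pi> :: "nat \<Rightarrow> nat" and c N m :: nat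
  defines "p \<equiv> insf \<pi> c N"
  assumes \<pi>N: "\<pi> N = N" and Nm: "m < N" and cN: "c \<noteq> N"
  shows "(\<exists>j>0. (\<pi> ^^ j) i \<le> m) \<Longrightarrow> (\<exists>j>0. (p ^^ j) i \<le> m) \<and> del_large p m i = del_large \<pi> m i"
proof (induction "Lm \<pi> m i" arbitrary: i rule: less_induct)
  case less
  have pc: "p c = N" and pN: "p N = \<pi> c" and po: "\<And>x. x \<noteq> c \<Longrightarrow> x \<noteq> N \<Longrightarrow> p x = \<pi> x"
    using cN by (auto simp: p_def insf_def)
  have iN: "i \<noteq> N"
  proof
    assume "i = N"
    have "(\<pi> ^^ j) N = N" for j using \<pi>N by (induction j) auto
    then show False using less.prems \<open>i = N\<close> Nm by auto
  qed
  show ?case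
  proof (cases "i = c")
    case False
    then have pi: "p i = \<pi> i" using po iN by simp
    show ?thesis
    proof (cases "\<pi> i \<le> m")
      case True
      have "(p ^^ 1) i \<le> m" using True pi by simp
      then have "\<exists>j>0. (p ^^ j) i \<le> m" by blast
      then show ?thesis using pi dl_here(1)[of \<pi> i m] dl_here(1)[of p i m] True by simp
    next
      case F: False
      note st = dl_step[OF less.prems F]
      have IH: "(\<exists>j>0. (p ^^ j) (\<pi> i) \<le> m) \<and> del_large p m (\<pi> i) = del_large \<pi> m (\<pi> i)"
        using less.hyps[of "\<pi> i"] st by simp
      then obtain j where j: "j > 0" "(p ^^ j) (p i) \<le> m" using pi by auto
      have ex: "\<exists>j>0. (p ^^ j) i \<le> m"
        by (rule exI[of _ "Suc j"]) (use j in \<open>simp add: funpow_Suc_right del: funpow.simps\<close>)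
      have "del_large p m i = del_large p m (p i)"
        using dl_step(3)[OF ex] F pi by simp
      then show ?thesis using ex IH pi st(3) by simp
    qed
  next
    case True
    have NN: "\<not> N \<le> m" using Nm by simp
    show ?thesis
    proof (cases "\<pi> c \<le> m")
      case T2: True
      have ex: "\<exists>j>0. (p ^^ j) i \<le> m"
        by (rule exI[of _ 2]) (use T2 True pc pN in \<open>simp add: numeral_2_eq_2\<close>)
      have exN: "\<exists>j>0. (p ^^ j) N \<le> m"
        by (rule exI[of _ 1]) (use T2 pN in simp)
      have "del_large p m i = del_large p m N"
        using dl_step(3)[OF ex] True pc NN by simp
      also have "\<dots> = \<pi> c" using dl_here(1)[of p N m] pN T2 by simp
      also have "\<dots> = del_large \<pi> m i" using dl_here(1)[of \<pi> c m] T2 True by simp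
      finally show ?thesis using ex by simp
    next
      case F: False
      note st = dl_step[OF less.prems[unfolded True] F]
      have IH: "(\<exists>j>0. (p ^^ j) (\<pi> c) \<le> m) \<and> del_large p m (\<pi> c) = del_large \<pi> m (\<pi> c)"
        using less.hyps[of "\<pi> c"] st True by simp
      then obtain j where j: "j > 0" "(p ^^ j) (\<pi> c) \<le> m" by auto
      have exN: "\<exists>j>0. (p ^^ j) N \<le> m"
        by (rule exI[of _ "Suc j"]) (use j pN in \<open>simp add: funpow_Suc_right del: funpow.simps\<close>)
      have ex: "\<exists>j>0. (p ^^ j) i \<le> m"
        using exN pc True by (metis funpow_Suc_right o_apply zero_less_Suc)
      have "del_large p m i = del_large p m N"
        using dl_step(3)[OF ex] True pc NN by simp
      also have "\<dots> = del_large p m (\<pi> c)" using dl_step(3)[OF exN] pN F by simp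
      also have "\<dots> = del_large \<pi> m c" using IH st(3) by simp
      finally show ?thesis using ex True by simp
    qed
  qed
qed

lemma simsun2_alt: "simsun2 n p \<longleftrightarrow> (\<forall>m\<le>n. no_double_exc m (del_large p m))"
proof
  assume H: "simsun2 n p"
  show "\<forall>m\<le>n. no_double_exc m (del_large p m)"
  proof (intro allI impI)
    fix m assume "m \<le> n"
    then have "n - m \<in> {0..n}" "n - (n - m) = m" by auto
    then show "no_double_exc m (del_large p m)" using H unfolding simsun2_def by metis
  qed
next
  assume "\<forall>m\<le>n. no_double_exc m (del_large p m)"
  then show "simsun2 n p" unfolding simsun2_def by auto
qed

lemma nde_cong: "(\<And>i. i \<in> {1..m} \<Longrightarrow> \<sigma> i = \<sigma>' i) \<Longrightarrow> no_double_exc m \<sigma> = no_double_exc m \<sigma>'"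
  unfolding no_double_exc_def by (metis)

lemma perm_return:
  assumes "\<pi> permutes {1..(n::nat)}"
  shows "\<exists>j>0. (\<pi> ^^ j) i = i"
proof -
  have "permutation \<pi>" using assms permutation_permutes by blast
  then obtain j where "j > 0" "(\<pi> ^^ j) i = i" by (rule permutation_self)
  then show ?thesis by blast
qed

lemma funpow_fix: "f x = x \<Longrightarrow> (f ^^ j) x = x"
  by (induction j) auto

lemma insf_eq: "\<pi> N = N \<Longrightarrow> insf \<pi> c N = \<pi> \<circ> transpose c N"
  by (auto simp: insf_def transpose_def fun_eq_iff)

lemma insf_NN: "\<pi> N = N \<Longrightarrow> insf \<pi> N N = \<pi>"
  by (auto simp: insf_def fun_eq_iff)

lemma insf_permutes:
  assumes "\<pi> permutes {1..n}" "c \<in> {1..Suc n}"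
  shows "insf \<pi> c (Suc n) permutes {1..Suc n}"
proof -
  have N: "\<pi> (Suc n) = Suc n" using assms(1) by (simp add: permutes_not_in)
  have "\<pi> permutes {1..Suc n}" using assms(1) by (rule permutes_subset) auto
  moreover have "transpose c (Suc n) permutes {1..Suc n}" using assms(2) by (intro permutes_swap_id) auto
  ultimately show ?thesis unfolding insf_eq[of \<pi> "Suc n" c, OF N] by (rule permutes_compose[rotated])
qed

lemma simsun_ins:
  assumes \<pi>: "\<pi> permutes {1..n}" and c: "c \<in> {1..Suc n}"
  shows "simsun2 (Suc n) (insf \<pi> c (Suc n)) \<longleftrightarrow>
           simsun2 n \<pi> \<and> no_double_exc (Suc n) (insf \<pi> c (Suc n))"
proof -
  let ?p = "insf \<pi> c (Suc n)"
  have N: "\<pi> (Suc n) = Suc n" using \<pi> by (simp add: permutes_not_in)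
  have pp: "?p permutes {1..Suc n}" by (rule insf_permutes[OF \<pi> c])
  have top: "no_double_exc (Suc n) (del_large ?p (Suc n)) = no_double_exc (Suc n) ?p"
  proof (rule nde_cong)
    fix i assume "i \<in> {1..Suc n}"
    then have "?p i \<in> {1..Suc n}" using permutes_in_image[OF pp] by blast
    then show "del_large ?p (Suc n) i = ?p i" by (intro dl_here) auto
  qed
  have low: "no_double_exc m (del_large ?p m) = no_double_exc m (del_large \<pi> m)" if "m \<le> n" for m
  proof (rule nde_cong)
    fix i assume i: "i \<in> {1..m}"
    show "del_large ?p m i = del_large \<pi> m i"
    proof (cases "c = Suc n")
      case True then show ?thesis using insf_NN[of \<pi> "Suc n", OF N] by simp
    next
      case False
      obtain j where "j > 0" "(\<pi> ^^ j) i = i" using perm_return[OF \<pi>] by blast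
      then have "\<exists>j>0. (\<pi> ^^ j) i \<le> m" using i by auto
      then show ?thesis using dl_insf[of \<pi> "Suc n" m c i] N that False by simp
    qed
  qed
  have "simsun2 (Suc n) ?p \<longleftrightarrow> (\<forall>m\<le>n. no_double_exc m (del_large ?p m)) \<and> no_double_exc (Suc n) (del_large ?p (Suc n))"
    unfolding simsun2_alt by (auto simp: le_Suc_eq)
  also have "\<dots> \<longleftrightarrow> simsun2 n \<pi> \<and> no_double_exc (Suc n) ?p"
    unfolding simsun2_alt top using low by auto
  finally show ?thesis .
qed

lemma nde_ins:
  assumes \<pi>: "\<pi> permutes {1..n}" and c: "c \<in> {1..Suc n}" and nde: "no_double_exc n \<pi>"
  shows "no_double_exc (Suc n) (insf \<pi> c (Suc n)) \<longleftrightarrow> (c = Suc n \<or> \<not> inv \<pi> c < c)"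
proof -
  let ?p = "insf \<pi> c (Suc n)"
  have N: "\<pi> (Suc n) = Suc n" using \<pi> by (simp add: permutes_not_in)
  have inr: "x \<in> {1..n} \<Longrightarrow> \<pi> x \<in> {1..n}" for x using permutes_in_image[OF \<pi>] by blast
  have inv_in: "x \<in> {1..n} \<Longrightarrow> inv \<pi> x \<in> {1..n}" for x
    using permutes_in_image[OF permutes_inv[OF \<pi>]] by blast
  have pinv: "\<pi> (inv \<pi> x) = x" for x using \<pi> by (simp add: permutes_inverses)
  show ?thesis
  proof (cases "c = Suc n")
    case True
    then have pe: "?p = \<pi>" using insf_NN[of \<pi> "Suc n", OF N] by simp
    have "no_double_exc (Suc n) \<pi>"
      unfolding no_double_exc_def
    proof (rule notI, elim bexE conjE)
      fix x y assume x: "x \<in> {1..Suc n}" and y: "y \<in> {1..Suc n}" and h: "\<pi> y = x" "y < x" "x < \<pi> x"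
      have "x \<noteq> Suc n" using h N by auto
      moreover have "y \<noteq> Suc n" using h x by auto
      ultimately have "x \<in> {1..n}" "y \<in> {1..n}" using x y by auto
      then show False using nde h unfolding no_double_exc_def by blast
    qed
    then show ?thesis using pe True by simp
  next
    case False
    then have cn: "c \<in> {1..n}" using c by auto
    have pc: "?p c = Suc n" and pN: "?p (Suc n) = \<pi> c" and po: "\<And>x. x \<noteq> c \<Longrightarrow> x \<noteq> Suc n \<Longrightarrow> ?p x = \<pi> x"
      using False by (auto simp: insf_def)
    show ?thesis
    proof
      assume H: "no_double_exc (Suc n) ?p"
      show "c = Suc n \<or> \<not> inv \<pi> c < c"
      proof (rule disjI2, rule notI)
        assume lt: "inv \<pi> c < c"
        have yi: "inv \<pi> c \<in> {1..n}" using inv_in cn by blast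
        have "?p (inv \<pi> c) = c" using po[of "inv \<pi> c"] lt yi pinv by auto
        moreover have "inv \<pi> c \<in> {1..Suc n}" "c \<in> {1..Suc n}" "c < ?p c" using yi cn pc by auto
        ultimately show False using H lt unfolding no_double_exc_def by blast
      qed
    next
      assume A: "c = Suc n \<or> \<not> inv \<pi> c < c"
      then have A': "\<not> inv \<pi> c < c" using False by simp
      show "no_double_exc (Suc n) ?p"
        unfolding no_double_exc_def
      proof (rule notI, elim bexE conjE)
        fix x y assume x: "x \<in> {1..Suc n}" and y: "y \<in> {1..Suc n}" and h: "?p y = x" "y < x" "x < ?p x"
        have xN: "x \<noteq> Suc n" using h pN inr[OF cn] by auto
        have yN: "y \<noteq> Suc n" using h x by auto
        show False
        proof (cases "x = c")
          case True
          have "y \<noteq> c" using h True by auto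
          then have "\<pi> y = c" using po[OF _ yN] h True by simp
          then have "inv \<pi> c = y" using \<pi> by (metis permutes_inverses(2))
          then show False using A' h True by simp
        next
          case xc: False
          have yc: "y \<noteq> c" using h pc xN by auto
          have "\<pi> y = x" "x < \<pi> x" using h po[OF yc yN] po[OF xc xN] by auto
          moreover have "x \<in> {1..n}" "y \<in> {1..n}" using x y xN yN by auto
          ultimately show False using nde h unfolding no_double_exc_def by blast
        qed
      qed
    qed
  qed
qed

lemma exc_ins:
  assumes \<pi>: "\<pi> permutes {1..n}" and c: "c \<in> {1..Suc n}"
  shows "exc (Suc n) (insf \<pi> c (Suc n)) = exc n \<pi> + (if c \<noteq> Suc n \<and> \<pi> c \<le> c then 1 else 0)"
proof -
  let ?p = "insf \<pi> c (Suc n)"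
  let ?E = "{i\<in>{1..n}. \<pi> i > i}"
  have N: "\<pi> (Suc n) = Suc n" using \<pi> by (simp add: permutes_not_in)
  have inr: "x \<in> {1..n} \<Longrightarrow> \<pi> x \<in> {1..n}" for x using permutes_in_image[OF \<pi>] by blast
  show ?thesis
  proof (cases "c = Suc n")
    case True
    then have pe: "?p = \<pi>" using insf_NN[of \<pi> "Suc n", OF N] by simp
    have "{i\<in>{1..Suc n}. \<pi> i > i} = ?E" using N by (auto simp: le_Suc_eq)
    then show ?thesis using True pe by (simp add: exc_def)
  next
    case False
    then have cn: "c \<in> {1..n}" using c by auto
    have "{i\<in>{1..Suc n}. ?p i > i} = insert c ?E"
    proof (rule set_eqI)
      fix i
      show "i \<in> {i\<in>{1..Suc n}. ?p i > i} \<longleftrightarrow> i \<in> insert c ?E"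
        using cn inr[OF cn] False by (auto simp: insf_def le_Suc_eq)
    qed
    moreover have "finite ?E" by simp
    ultimately show ?thesis using False cn by (auto simp: exc_def card_insert_if)
  qed
qed


definition orb :: "(nat \<Rightarrow> nat) \<Rightarrow> nat \<Rightarrow> nat set" where
  "orb f i = {(f ^^ k) i | k. True}"

lemma orb_iff: "y \<in> orb f i \<longleftrightarrow> (\<exists>k. y = (f ^^ k) i)"
  by (auto simp: orb_def)

lemma cyc_orb: "cyc n p = card (orb p ` {1..n})"
  by (simp add: cyc_def orb_def)

lemma orb_sub:
  assumes "\<pi> permutes {1..n}" "i \<in> {1..n}"
  shows "orb \<pi> i \<subseteq> {1..n}"
proof
  fix y assume "y \<in> orb \<pi> i"
  then obtain k where "y = (\<pi> ^^ k) i" unfolding orb_def by blast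
  then show "y \<in> {1..n}" using permutes_in_funpow_image[OF assms] by simp
qed


lemma cyc_ins:
  assumes \<pi>: "\<pi> permutes {1..n}" and c: "c \<in> {1..Suc n}"
  shows "cyc (Suc n) (insf \<pi> c (Suc n)) = cyc n \<pi> + (if c = Suc n then 1 else 0)"
proof -
  let ?p = "insf \<pi> c (Suc n)"
  have N: "\<pi> (Suc n) = Suc n" using \<pi> by (simp add: permutes_not_in)
  have inr: "x \<in> {1..n} \<Longrightarrow> \<pi> x \<in> {1..n}" for x using permutes_in_image[OF \<pi>] by blast
  have fin: "finite (orb \<pi> ` {1..n})" by simp
  show ?thesis
  proof (cases "c = Suc n")
    case True
    then have pe: "?p = \<pi>" using insf_NN[of \<pi> "Suc n", OF N] by simp
    have oN: "orb \<pi> (Suc n) = {Suc n}" unfolding orb_def using funpow_fix[of \<pi> "Suc n", OF N] by auto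
    have nin: "{Suc n} \<notin> orb \<pi> ` {1..n}"
    proof
      assume "{Suc n} \<in> orb \<pi> ` {1..n}"
      then obtain i where "i \<in> {1..n}" "{Suc n} = orb \<pi> i" by blast
      then have "Suc n \<in> {1..n}" using orb_sub[OF \<pi>] by blast
      then show False by simp
    qed
    have "orb \<pi> ` {1..Suc n} = insert (orb \<pi> (Suc n)) (orb \<pi> ` {1..n})"
      by (simp add: atLeastAtMostSuc_conv)
    then have "card (orb \<pi> ` {1..Suc n}) = Suc (card (orb \<pi> ` {1..n}))"
      using nin fin oN by simp
    then show ?thesis using pe True by (simp add: cyc_orb)
  next
    case False
    then have cn: "c \<in> {1..n}" using c by auto
    have pc: "?p c = Suc n" and pN: "?p (Suc n) = \<pi> c" and po: "\<And>x. x \<noteq> c \<Longrightarrow> x \<noteq> Suc n \<Longrightarrow> ?p x = \<pi> x"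
      using False by (auto simp: insf_def)
    define g where "g S = (if c \<in> S then insert (Suc n) S else S)" for S
    have orbp: "orb ?p i = g (orb \<pi> i)" if i: "i \<in> {1..n}" for i
    proof
      have inv: "\<exists>k'. (?p ^^ k) i = (\<pi> ^^ k') i \<or> ((?p ^^ k) i = Suc n \<and> (\<pi> ^^ k') i = c)" for k
      proof (induction k)
        case 0 show ?case by (rule exI[of _ 0]) simp
      next
        case (Suc k)
        then obtain k' where k': "(?p ^^ k) i = (\<pi> ^^ k') i \<or> ((?p ^^ k) i = Suc n \<and> (\<pi> ^^ k') i = c)" by blast
        have xin: "(\<pi> ^^ k') i \<in> {1..n}" using permutes_in_funpow_image[OF \<pi> i] .
        show ?case
        proof (cases "(?p ^^ k) i = (\<pi> ^^ k') i")
          case T: True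
          show ?thesis
          proof (cases "(\<pi> ^^ k') i = c")
            case True then show ?thesis using T pc by (intro exI[of _ k']) simp
          next
            case F: False
            have "(\<pi> ^^ k') i \<noteq> Suc n" using xin by auto
            then show ?thesis using T F po by (intro exI[of _ "Suc k'"]) simp
          qed
        next
          case False
          then have "(?p ^^ k) i = Suc n" "(\<pi> ^^ k') i = c" using k' by auto
          then show ?thesis using pN by (intro exI[of _ "Suc k'"]) simp
        qed
      qed
      show "orb ?p i \<subseteq> g (orb \<pi> i)"
      proof
        fix y assume "y \<in> orb ?p i"
        then obtain k where y: "y = (?p ^^ k) i" by (auto simp: orb_def)
        obtain k' where "(?p ^^ k) i = (\<pi> ^^ k') i \<or> ((?p ^^ k) i = Suc n \<and> (\<pi> ^^ k') i = c)"
          using inv by blast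
        then show "y \<in> g (orb \<pi> i)" using y by (auto simp: g_def orb_def)
      qed
      have bk: "\<exists>k. (?p ^^ k) i = (\<pi> ^^ k') i" for k'
      proof (induction k')
        case 0 show ?case by (rule exI[of _ 0]) simp
      next
        case (Suc k')
        then obtain k where k: "(?p ^^ k) i = (\<pi> ^^ k') i" by blast
        have xin: "(\<pi> ^^ k') i \<in> {1..n}" using permutes_in_funpow_image[OF \<pi> i] .
        then have xN: "(\<pi> ^^ k') i \<noteq> Suc n" by auto
        show ?case
        proof (cases "(\<pi> ^^ k') i = c")
          case True
          then show ?thesis using k pc pN by (intro exI[of _ "Suc (Suc k)"]) simp
        next
          case False
          then show ?thesis using k po xN by (intro exI[of _ "Suc k"]) simp
        qed
      qed
      show "g (orb \<pi> i) \<subseteq> orb ?p i"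
      proof
        fix y assume y: "y \<in> g (orb \<pi> i)"
        show "y \<in> orb ?p i"
        proof (cases "y \<in> orb \<pi> i")
          case True
          then obtain k' where "y = (\<pi> ^^ k') i" by (auto simp: orb_def)
          then obtain k where "(?p ^^ k) i = y" using bk[of k'] by auto
          then show ?thesis unfolding orb_def by blast
        next
          case False
          then have "y = Suc n" "c \<in> orb \<pi> i" using y by (auto simp: g_def split: if_splits)
          then obtain k' where "c = (\<pi> ^^ k') i" by (auto simp: orb_def)
          then obtain k where "(?p ^^ k) i = c" using bk[of k'] by auto
          then have "(?p ^^ Suc k) i = Suc n" using pc by simp
          then show ?thesis using \<open>y = Suc n\<close> unfolding orb_iff by metis
        qed
      qed
    qed
    have pcn: "\<pi> c \<in> {1..n}" using inr[OF cn] .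
    have corb: "c \<in> orb \<pi> (\<pi> c)"
    proof -
      obtain j where j: "j > 0" "(\<pi> ^^ j) c = c" using perm_return[OF \<pi>] by blast
      then obtain j' where "j = Suc j'" by (cases j) auto
      then have "(\<pi> ^^ j') (\<pi> c) = c" using j by (simp add: funpow_Suc_right del: funpow.simps)
      then show ?thesis unfolding orb_iff by metis
    qed
    have oN: "orb ?p (Suc n) = orb ?p (\<pi> c)"
    proof
      show "orb ?p (Suc n) \<subseteq> orb ?p (\<pi> c)"
      proof
        fix y assume "y \<in> orb ?p (Suc n)"
        then obtain k where y: "y = (?p ^^ k) (Suc n)" by (auto simp: orb_def)
        show "y \<in> orb ?p (\<pi> c)"
        proof (cases k)
          case 0
          then have "y = Suc n" using y by simp
          then show ?thesis using orbp[OF pcn] corb by (simp add: g_def)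
        next
          case (Suc k')
          then have "y = (?p ^^ k') (\<pi> c)" using y pN by (simp add: funpow_Suc_right del: funpow.simps)
          then show ?thesis by (auto simp: orb_def)
        qed
      qed
      show "orb ?p (\<pi> c) \<subseteq> orb ?p (Suc n)"
      proof
        fix y assume "y \<in> orb ?p (\<pi> c)"
        then obtain k where y: "y = (?p ^^ k) (\<pi> c)" by (auto simp: orb_def)
        then have "y = (?p ^^ Suc k) (Suc n)" using pN by (simp add: funpow_Suc_right del: funpow.simps)
        then show "y \<in> orb ?p (Suc n)" unfolding orb_iff by blast
      qed
    qed
    have "orb ?p ` {1..Suc n} = insert (orb ?p (Suc n)) (orb ?p ` {1..n})"
      by (simp add: atLeastAtMostSuc_conv)
    also have "\<dots> = orb ?p ` {1..n}"
      by (rule insert_absorb) (simp only: oN imageI[OF pcn])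
    also have "\<dots> = g ` (orb \<pi> ` {1..n})"
      unfolding image_image by (rule image_cong[OF refl orbp])
    finally have e: "orb ?p ` {1..Suc n} = g ` (orb \<pi> ` {1..n})" .
    have "inj_on g (orb \<pi> ` {1..n})"
    proof (rule inj_onI)
      fix A B assume A: "A \<in> orb \<pi> ` {1..n}" and B: "B \<in> orb \<pi> ` {1..n}" and gg: "g A = g B"
      have "A \<subseteq> {1..n}" "B \<subseteq> {1..n}" using A B orb_sub[OF \<pi>] by blast+
      then have "Suc n \<notin> A" "Suc n \<notin> B" by auto
      then have "g A - {Suc n} = A" "g B - {Suc n} = B" by (auto simp: g_def)
      then show "A = B" using gg by metis
    qed
    then have "card (orb ?p ` {1..Suc n}) = card (orb \<pi> ` {1..n})" unfolding e by (rule card_image)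
    then show ?thesis using False by (simp add: cyc_orb)
  qed
qed

lemma map_poly_pderiv_monom: "map_poly pderiv (monom a k) = monom (pderiv a) k"
  by (rule poly_eqI) (simp add: coeff_map_poly coeff_monom)

lemma quad_monom: "[:0, a, b:] * monom c k = monom (a*c) (Suc k) + monom (b*c) (Suc (Suc k))"
  by (rule poly_eqI) (simp add: coeff_monom coeff_pCons mult_pCons_left split: nat.splits)

lemma key_alg:
  assumes "2 * e \<le> n"
  shows "([:0, 1:] + [:[:0, of_nat n:]:]) * monom (monom (1::real) e) cy
      + [:[:0, 1, -2:]:] * map_poly pderiv (monom (monom 1 e) cy)
    = monom (monom 1 e) (Suc cy) + smult (monom (of_nat e) e) (monom 1 cy)
      + smult (monom (of_nat (n - 2*e)) (Suc e)) (monom 1 cy)"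
proof -
  have i1: "[:0, 1:] * monom (monom (1::real) e) cy = monom (monom 1 e) (Suc cy)"
    by (rule poly_eqI) (simp add: coeff_monom coeff_pCons mult_pCons_left split: nat.splits)
  have i2: "[:[:0, of_nat n:]:] * monom (monom (1::real) e) cy = monom (monom (of_nat n) (Suc e)) cy"
    by (simp add: mult_pCons_left smult_monom quad_monom[of _ 0, simplified] monom_Suc)
  have inner: "monom (of_nat n) (Suc e) + [:0,1,-2:] * pderiv (monom (1::real) e)
      = monom (of_nat e) e + monom (of_nat (n - 2*e)) (Suc e)"
  proof (cases e)
    case 0 then show ?thesis by (simp add: pderiv_monom)
  next
    case (Suc e')
    have "[:0,1,-2:] * pderiv (monom (1::real) e) = monom (of_nat e) e + monom (- 2 * of_nat e) (Suc e)"
    proof -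
      have "pderiv (monom (1::real) e) = monom (of_nat e) e'" using Suc by (simp add: pderiv_monom)
      then have "[:0,1,-2:] * pderiv (monom (1::real) e) = monom (1 * of_nat e) (Suc e') + monom (-2 * of_nat e) (Suc (Suc e'))"
        by (simp only: quad_monom)
      then show ?thesis using Suc by simp
    qed
    moreover have "monom (of_nat n) (Suc e) + monom (- 2 * of_nat e) (Suc e) = monom (of_nat (n - 2*e) :: real) (Suc e)"
      using assms by (simp only: add_monom of_nat_diff) (simp add: of_nat_diff)
    ultimately show ?thesis by (simp add: algebra_simps)
  qed
  have i3: "[:[:0, 1, -2:]:] * map_poly pderiv (monom (monom (1::real) e) cy)
      = monom ([:0,1,-2:] * pderiv (monom 1 e)) cy"
    by (simp add: map_poly_pderiv_monom mult_pCons_left smult_monom)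
  have "([:0, 1:] + [:[:0, of_nat n:]:]) * monom (monom (1::real) e) cy
      + [:[:0, 1, -2:]:] * map_poly pderiv (monom (monom 1 e) cy)
    = monom (monom 1 e) (Suc cy) + monom (monom (of_nat n) (Suc e) + [:0,1,-2:] * pderiv (monom 1 e)) cy"
    by (simp only: distrib_right i1 i2 i3 add_monom add.assoc)
  also have "\<dots> = monom (monom 1 e) (Suc cy) + smult (monom (of_nat e) e) (monom 1 cy)
      + smult (monom (of_nat (n - 2*e)) (Suc e)) (monom 1 cy)"
    unfolding inner by (simp add: smult_monom add_monom)
  finally show ?thesis .
qed


lemma SS_nde: "\<pi> \<in> SS n \<Longrightarrow> no_double_exc n \<pi>"
proof -
  assume "\<pi> \<in> SS n"
  then have \<pi>: "\<pi> permutes {1..n}" and s: "simsun2 n \<pi>" by (auto simp: SS_def)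
  have "no_double_exc n (del_large \<pi> n)" using s by (simp add: simsun2_alt)
  moreover have "no_double_exc n (del_large \<pi> n) = no_double_exc n \<pi>"
  proof (rule nde_cong)
    fix i assume "i \<in> {1..n}"
    then have "\<pi> i \<in> {1..n}" using permutes_in_image[OF \<pi>] by blast
    then show "del_large \<pi> n i = \<pi> i" by (intro dl_here) auto
  qed
  ultimately show ?thesis by simp
qed

definition Aset :: "(nat \<Rightarrow> nat) \<Rightarrow> nat \<Rightarrow> nat set" where
  "Aset \<pi> n = {c\<in>{1..n}. \<not> inv \<pi> c < c}"

lemma card_split: "finite S \<Longrightarrow> card {x\<in>S. P x} + card {x\<in>S. \<not> P x} = card S"
proof -
  assume f: "finite S"
  have "S = {x\<in>S. P x} \<union> {x\<in>S. \<not> P x}" by auto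
  then have "card S = card ({x\<in>S. P x} \<union> {x\<in>S. \<not> P x})" by simp
  also have "\<dots> = card {x\<in>S. P x} + card {x\<in>S. \<not> P x}"
    by (rule card_Un_disjoint) (use f in auto)
  finally show ?thesis by simp
qed

lemma counting:
  assumes \<pi>: "\<pi> permutes {1..n}" and nde: "no_double_exc n \<pi>"
  shows "card {c\<in>Aset \<pi> n. \<not> \<pi> c \<le> c} = exc n \<pi>"
    "card {c\<in>Aset \<pi> n. \<pi> c \<le> c} = n - 2 * exc n \<pi>"
    "2 * exc n \<pi> \<le> n"
proof -
  let ?E = "{c\<in>{1..n}. \<pi> c > c}"
  have pinv: "\<pi> (inv \<pi> x) = x" "inv \<pi> (\<pi> x) = x" for x using \<pi> by (simp_all add: permutes_inverses)
  have inv_in: "x \<in> {1..n} \<Longrightarrow> inv \<pi> x \<in> {1..n}" for x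
    using permutes_in_image[OF permutes_inv[OF \<pi>]] by blast
  have inr: "x \<in> {1..n} \<Longrightarrow> \<pi> x \<in> {1..n}" for x using permutes_in_image[OF \<pi>] by blast
  have E: "{c\<in>Aset \<pi> n. \<not> \<pi> c \<le> c} = ?E"
  proof (rule set_eqI)
    fix c
    show "c \<in> {c\<in>Aset \<pi> n. \<not> \<pi> c \<le> c} \<longleftrightarrow> c \<in> ?E"
    proof
      assume "c \<in> ?E"
      then have c: "c \<in> {1..n}" "c < \<pi> c" by auto
      have "\<not> inv \<pi> c < c"
      proof
        assume lt: "inv \<pi> c < c"
        have "\<pi> (inv \<pi> c) = c" by (rule pinv)
        then show False using nde lt c inv_in[OF c(1)] unfolding no_double_exc_def by blast
      qed
      then show "c \<in> {c\<in>Aset \<pi> n. \<not> \<pi> c \<le> c}" using c by (auto simp: Aset_def)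
    qed (auto simp: Aset_def)
  qed
  show c1: "card {c\<in>Aset \<pi> n. \<not> \<pi> c \<le> c} = exc n \<pi>" unfolding E exc_def ..
  have Aimg: "Aset \<pi> n = \<pi> ` {d\<in>{1..n}. \<pi> d \<le> d}"
  proof (rule set_eqI)
    fix c
    show "c \<in> Aset \<pi> n \<longleftrightarrow> c \<in> \<pi> ` {d\<in>{1..n}. \<pi> d \<le> d}"
    proof
      assume "c \<in> Aset \<pi> n"
      then have c: "c \<in> {1..n}" "\<not> inv \<pi> c < c" by (auto simp: Aset_def)
      have "inv \<pi> c \<in> {d\<in>{1..n}. \<pi> d \<le> d}" using c inv_in[OF c(1)] pinv(1)[of c] by auto
      moreover have "c = \<pi> (inv \<pi> c)" using pinv by simp
      ultimately show "c \<in> \<pi> ` {d\<in>{1..n}. \<pi> d \<le> d}" by blast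
    next
      assume "c \<in> \<pi> ` {d\<in>{1..n}. \<pi> d \<le> d}"
      then obtain d where d: "d \<in> {1..n}" "\<pi> d \<le> d" "c = \<pi> d" by blast
      then show "c \<in> Aset \<pi> n" using inr[OF d(1)] pinv(2)[of d] by (auto simp: Aset_def)
    qed
  qed
  have "card (Aset \<pi> n) = card {d\<in>{1..n}. \<pi> d \<le> d}"
    unfolding Aimg by (rule card_image) (rule permutes_inj_on[OF \<pi>])
  moreover have "card {d\<in>{1..n}. \<pi> d \<le> d} + exc n \<pi> = n"
    using card_split[of "{1..n}" "\<lambda>d. \<pi> d \<le> d"] by (simp add: exc_def not_le)
  moreover have "card {c\<in>Aset \<pi> n. \<pi> c \<le> c} + exc n \<pi> = card (Aset \<pi> n)"
    using card_split[of "Aset \<pi> n" "\<lambda>c. \<pi> c \<le> c"] c1 by (simp add: Aset_def)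
  ultimately show "card {c\<in>Aset \<pi> n. \<pi> c \<le> c} = n - 2 * exc n \<pi>" "2 * exc n \<pi> \<le> n"
    by simp_all
qed

lemma SS_finite: "finite (SS n)"
proof (rule finite_subset)
  show "SS n \<subseteq> {p. p permutes {1..n}}" by (auto simp: SS_def)
  show "finite {p. p permutes {1..n}}" by (rule finite_permutations) simp
qed

lemma ins_in_SS:
  assumes "\<pi> \<in> SS n" "c \<in> insert (Suc n) (Aset \<pi> n)"
  shows "insf \<pi> c (Suc n) \<in> SS (Suc n)"
proof -
  have \<pi>: "\<pi> permutes {1..n}" and s: "simsun2 n \<pi>" using assms(1) by (auto simp: SS_def)
  have c: "c \<in> {1..Suc n}" using assms(2) by (auto simp: Aset_def)
  have "no_double_exc (Suc n) (insf \<pi> c (Suc n))"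
    using nde_ins[OF \<pi> c SS_nde[OF assms(1)]] assms(2) by (auto simp: Aset_def)
  then show ?thesis using simsun_ins[OF \<pi> c] s insf_permutes[OF \<pi> c] by (simp add: SS_def)
qed

lemma SS_Suc_surj:
  assumes "p \<in> SS (Suc n)"
  shows "p \<in> (\<lambda>(\<pi>,c). insf \<pi> c (Suc n)) ` (SIGMA \<pi>:SS n. insert (Suc n) (Aset \<pi> n))"
proof -
  have p: "p permutes {1..Suc n}" and s: "simsun2 (Suc n) p" using assms by (auto simp: SS_def)
  define c where "c = inv p (Suc n)"
  define \<pi> where "\<pi> = p \<circ> transpose c (Suc n)"
  have c: "c \<in> {1..Suc n}" unfolding c_def using permutes_in_image[OF permutes_inv[OF p]] by simp
  have pc: "p c = Suc n" unfolding c_def using p by (simp add: permutes_inverses)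
  have \<pi>N: "\<pi> (Suc n) = Suc n" by (simp add: \<pi>_def pc)
  have \<pi>1: "\<pi> permutes {1..Suc n}" unfolding \<pi>_def
    by (rule permutes_compose[OF _ p]) (rule permutes_swap_id, use c in auto)
  have \<pi>: "\<pi> permutes {1..n}"
  proof (rule permutes_superset[OF \<pi>1])
    fix x assume "x \<in> {1..Suc n} - {1..n}"
    then have "x = Suc n" by auto
    then show "\<pi> x = x" using \<pi>N by simp
  qed
  have pe: "insf \<pi> c (Suc n) = p"
  proof
    fix x
    show "insf \<pi> c (Suc n) x = p x"
      by (cases "x = c"; cases "x = Suc n") (auto simp: insf_def \<pi>_def pc)
  qed
  have ss: "simsun2 n \<pi> \<and> no_double_exc (Suc n) p" using simsun_ins[OF \<pi> c] s pe by simp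
  then have \<pi>SS: "\<pi> \<in> SS n" using \<pi> by (simp add: SS_def)
  have "c = Suc n \<or> \<not> inv \<pi> c < c" using nde_ins[OF \<pi> c SS_nde[OF \<pi>SS]] ss pe by simp
  then have "c \<in> insert (Suc n) (Aset \<pi> n)" using c by (auto simp: Aset_def)
  then show ?thesis using \<pi>SS pe by (auto intro!: image_eqI[of _ _ "(\<pi>, c)"])
qed

lemma SS_Suc_inj: "inj_on (\<lambda>(\<pi>,c). insf \<pi> c (Suc n)) (SIGMA \<pi>:SS n. insert (Suc n) (Aset \<pi> n))"
proof (rule inj_onI, clarify)
  fix \<pi> c \<pi>' c'
  assume a: "\<pi> \<in> SS n" "c \<in> insert (Suc n) (Aset \<pi> n)" "\<pi>' \<in> SS n" "c' \<in> insert (Suc n) (Aset \<pi>' n)"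
    and e: "insf \<pi> c (Suc n) = insf \<pi>' c' (Suc n)"
  have \<pi>: "\<pi> permutes {1..n}" and \<pi>': "\<pi>' permutes {1..n}" using a by (auto simp: SS_def)
  have c: "c \<in> {1..Suc n}" and c': "c' \<in> {1..Suc n}" using a by (auto simp: Aset_def)
  have N: "\<pi> (Suc n) = Suc n" "\<pi>' (Suc n) = Suc n" using \<pi> \<pi>' by (simp_all add: permutes_not_in)
  have inj: "inj (insf \<pi> c (Suc n))" using insf_permutes[OF \<pi> c] by (rule permutes_inj)
  have "insf \<pi> c (Suc n) c' = insf \<pi>' c' (Suc n) c'" using e by simp
  also have "\<dots> = Suc n" by (simp add: insf_def)
  finally have "insf \<pi> c (Suc n) c = Suc n" "insf \<pi> c (Suc n) c' = Suc n" by (simp_all add: insf_def)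
  then have cc: "c = c'" using inj by (metis injD)
  show "\<pi> = \<pi>' \<and> c = c'"
  proof
    show "\<pi> = \<pi>'"
    proof
      fix x
      have "insf \<pi> c (Suc n) x = insf \<pi>' c (Suc n) x" using e cc by simp
      moreover have "insf \<pi> c (Suc n) (Suc n) = insf \<pi>' c (Suc n) (Suc n)" using e cc by simp
      ultimately show "\<pi> x = \<pi>' x" using N
        by (cases "x = c"; cases "x = Suc n") (auto simp: insf_def split: if_splits)
    qed
  qed (rule cc)
qed

lemma map_poly_pderiv_add: "map_poly pderiv (p + q) = map_poly pderiv p + map_poly pderiv q"
  by (rule poly_eqI) (simp add: coeff_map_poly pderiv_add)

lemma map_poly_pderiv_sum: "map_poly pderiv (\<Sum>x\<in>A. f x) = (\<Sum>x\<in>A. map_poly pderiv (f x))"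
  by (induction A rule: infinite_finite_induct) (simp_all add: map_poly_pderiv_add)

lemma nat_monom: "of_nat k * monom (monom (1::real) j) cy = monom (monom (of_nat k) j) cy"
  by (simp add: of_nat_poly mult_pCons_left smult_monom)

lemma smult_monom2: "smult (monom a j) (monom (1::real poly) cy) = monom (monom a j) cy"
  by (simp add: smult_monom)

lemma inner_sum:
  assumes \<pi>SS: "\<pi> \<in> SS n"
  shows "(\<Sum>c\<in>insert (Suc n) (Aset \<pi> n). monom (monom (1::real) (exc (Suc n) (insf \<pi> c (Suc n)))) (cyc (Suc n) (insf \<pi> c (Suc n))))
    = ([:0, 1:] + [:[:0, of_nat n:]:]) * monom (monom (1::real) (exc n \<pi>)) (cyc n \<pi>)
      + [:[:0, 1, -2:]:] * map_poly pderiv (monom (monom 1 (exc n \<pi>)) (cyc n \<pi>))"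
proof -
  have \<pi>: "\<pi> permutes {1..n}" using \<pi>SS by (auto simp: SS_def)
  note cnt = counting[OF \<pi> SS_nde[OF \<pi>SS]]
  let ?e = "exc n \<pi>" and ?cy = "cyc n \<pi>"
  let ?A = "Aset \<pi> n"
  have finA: "finite ?A" by (simp add: Aset_def)
  have NA: "Suc n \<notin> ?A" by (simp add: Aset_def)
  have wN: "monom (monom (1::real) (exc (Suc n) (insf \<pi> (Suc n) (Suc n)))) (cyc (Suc n) (insf \<pi> (Suc n) (Suc n)))
      = monom (monom 1 ?e) (Suc ?cy)"
    using exc_ins[OF \<pi>, of "Suc n"] cyc_ins[OF \<pi>, of "Suc n"] by simp
  have wA: "monom (monom (1::real) (exc (Suc n) (insf \<pi> c (Suc n)))) (cyc (Suc n) (insf \<pi> c (Suc n)))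
      = (if \<pi> c \<le> c then monom (monom 1 (Suc ?e)) ?cy else monom (monom 1 ?e) ?cy)" if c: "c \<in> ?A" for c
  proof -
    have c1: "c \<in> {1..Suc n}" "c \<noteq> Suc n" using c by (auto simp: Aset_def)
    show ?thesis using exc_ins[OF \<pi> c1(1)] cyc_ins[OF \<pi> c1(1)] c1(2) by simp
  qed
  have "(\<Sum>c\<in>?A. monom (monom (1::real) (exc (Suc n) (insf \<pi> c (Suc n)))) (cyc (Suc n) (insf \<pi> c (Suc n))))
      = (\<Sum>c\<in>?A. (if \<pi> c \<le> c then monom (monom 1 (Suc ?e)) ?cy else monom (monom 1 ?e) ?cy))"
    by (rule sum.cong[OF refl wA])
  also have "\<dots> = (\<Sum>c\<in>?A \<inter> {c. \<pi> c \<le> c}. monom (monom 1 (Suc ?e)) ?cy) + (\<Sum>c\<in>?A \<inter> - {c. \<pi> c \<le> c}. monom (monom 1 ?e) ?cy)"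
    by (rule sum.If_cases[OF finA])
  also have "?A \<inter> {c. \<pi> c \<le> c} = {c\<in>?A. \<pi> c \<le> c}" by auto
  also have "?A \<inter> - {c. \<pi> c \<le> c} = {c\<in>?A. \<not> \<pi> c \<le> c}" by auto
  finally have sA: "(\<Sum>c\<in>?A. monom (monom (1::real) (exc (Suc n) (insf \<pi> c (Suc n)))) (cyc (Suc n) (insf \<pi> c (Suc n))))
      = of_nat (n - 2 * ?e) * monom (monom 1 (Suc ?e)) ?cy + of_nat ?e * monom (monom 1 ?e) ?cy"
    by (simp add: cnt)
  show ?thesis
    unfolding key_alg[OF cnt(3)] sum.insert[OF finA NA] wN sA smult_monom2 nat_monom
    by (simp add: algebra_simps)
qed

lemma weight_sum:
  "S2 (Suc n) = (\<Sum>\<pi>\<in>SS n. \<Sum>c\<in>insert (Suc n) (Aset \<pi> n).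
      monom (monom (1::real) (exc (Suc n) (insf \<pi> c (Suc n)))) (cyc (Suc n) (insf \<pi> c (Suc n))))"
proof -
  let ?f = "\<lambda>(\<pi>,c). insf \<pi> c (Suc n)"
  let ?D = "SIGMA \<pi>:SS n. insert (Suc n) (Aset \<pi> n)"
  have img: "SS (Suc n) = ?f ` ?D"
  proof
    show "SS (Suc n) \<subseteq> ?f ` ?D" using SS_Suc_surj by blast
    show "?f ` ?D \<subseteq> SS (Suc n)" using ins_in_SS by auto
  qed
  have "S2 (Suc n) = (\<Sum>p\<in>?f ` ?D. monom (monom 1 (exc (Suc n) p)) (cyc (Suc n) p))"
    unfolding S2_def img ..
  also have "\<dots> = (\<Sum>x\<in>?D. monom (monom 1 (exc (Suc n) (?f x))) (cyc (Suc n) (?f x)))"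
    by (rule sum.reindex[OF SS_Suc_inj, unfolded comp_def])
  also have "\<dots> = (\<Sum>\<pi>\<in>SS n. \<Sum>c\<in>insert (Suc n) (Aset \<pi> n).
      monom (monom (1::real) (exc (Suc n) (insf \<pi> c (Suc n)))) (cyc (Suc n) (insf \<pi> c (Suc n))))"
    by (subst sum.Sigma) (simp_all add: SS_finite Aset_def split_def)
  finally show ?thesis .
qed

theorem S2_rec:
  "S2 (Suc n) = ([:0, 1:] + [:[:0, of_nat n:]:]) * S2 n
                         + [:[:0, 1, -2:]:] * map_poly pderiv (S2 n)"
  unfolding weight_sum
  by (simp add: inner_sum S2_def sum_distrib_left map_poly_pderiv_sum sum.distrib)



fun dd :: "nat list \<Rightarrow> bool" where
  "dd (a # b # c # t) = ((a > b \<and> b > c) \<or> dd (b # c # t))"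
| "dd _ = False"

fun desl :: "nat list \<Rightarrow> nat" where
  "desl (a # b # t) = (if a > b then 1 else 0) + desl (b # t)"
| "desl _ = 0"

lemma hdd_dd: "has_double_descent w \<longleftrightarrow> dd w"
proof (induction w rule: dd.induct)
  case (1 a b c t)
  have "has_double_descent (a # b # c # t) \<longleftrightarrow> (a > b \<and> b > c) \<or> has_double_descent (b # c # t)"
    unfolding has_double_descent_def
  proof
    assume "\<exists>i. i + 2 < length (a # b # c # t) \<and> (a # b # c # t) ! i > (a # b # c # t) ! (i + 1)
        \<and> (a # b # c # t) ! (i + 1) > (a # b # c # t) ! (i + 2)"
    then obtain i where i: "i + 2 < length (a # b # c # t)" "(a # b # c # t) ! i > (a # b # c # t) ! (i + 1)"
        "(a # b # c # t) ! (i + 1) > (a # b # c # t) ! (i + 2)" by blast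
    show "(a > b \<and> b > c) \<or> (\<exists>i. i + 2 < length (b # c # t) \<and> (b # c # t) ! i > (b # c # t) ! (i + 1)
        \<and> (b # c # t) ! (i + 1) > (b # c # t) ! (i + 2))"
    proof (cases i)
      case 0 then show ?thesis using i by simp
    next
      case (Suc i') then show ?thesis using i by (intro disjI2 exI[of _ i']) simp
    qed
  next
    assume "(a > b \<and> b > c) \<or> (\<exists>i. i + 2 < length (b # c # t) \<and> (b # c # t) ! i > (b # c # t) ! (i + 1)
        \<and> (b # c # t) ! (i + 1) > (b # c # t) ! (i + 2))"
    then show "\<exists>i. i + 2 < length (a # b # c # t) \<and> (a # b # c # t) ! i > (a # b # c # t) ! (i + 1)
        \<and> (a # b # c # t) ! (i + 1) > (a # b # c # t) ! (i + 2)"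
    proof
      assume "a > b \<and> b > c" then show ?thesis by (intro exI[of _ 0]) simp
    next
      assume "\<exists>i. i + 2 < length (b # c # t) \<and> (b # c # t) ! i > (b # c # t) ! (i + 1)
        \<and> (b # c # t) ! (i + 1) > (b # c # t) ! (i + 2)"
      then obtain i where "i + 2 < length (b # c # t) \<and> (b # c # t) ! i > (b # c # t) ! (i + 1)
        \<and> (b # c # t) ! (i + 1) > (b # c # t) ! (i + 2)" by blast
      then show ?thesis by (intro exI[of _ "Suc i"]) simp
    qed
  qed
  then show ?case using 1 by simp
qed (auto simp: has_double_descent_def)

lemma dd_append_left: "dd xs \<Longrightarrow> dd (xs @ ys)"
  by (induction xs rule: dd.induct) auto

lemma dd_append_right: "dd ys \<Longrightarrow> dd (xs @ ys)"
proof (induction xs)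
  case (Cons x xs)
  then have "dd (xs @ ys)" by simp
  then show ?case by (cases "xs @ ys" rule: dd.cases) auto
qed simp

lemma dd_ins:
  assumes "\<forall>v\<in>set (xs @ ys). v < N" "\<not> dd (xs @ ys)"
  shows "dd (xs @ N # ys) \<longleftrightarrow> (\<exists>a b t. ys = a # b # t \<and> a > b)"
  using assms
proof (induction xs)
  case Nil
  then show ?case by (cases ys rule: dd.cases) auto
next
  case (Cons x xs)
  have nd: "\<not> dd (xs @ ys)" using Cons.prems(2) dd_append_right[of "xs @ ys" "[x]"] by auto
  have IH: "dd (xs @ N # ys) \<longleftrightarrow> (\<exists>a b t. ys = a # b # t \<and> a > b)" using Cons nd by simp
  have "dd (x # xs @ N # ys) \<longleftrightarrow> dd (xs @ N # ys)"
  proof (cases xs)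
    case Nil then show ?thesis using Cons.prems(1) by (cases ys) auto
  next
    case (Cons y zs)
    show ?thesis
    proof (cases zs)
      case Nil then show ?thesis using Cons \<open>xs = y # zs\<close> Cons.prems(1) by simp
    next
      case (Cons z us)
      have "\<not> (x > y \<and> y > z)"
      proof
        assume "x > y \<and> y > z"
        then have "dd (x # y # z # (us @ ys))" by simp
        then show False using \<open>xs = y # zs\<close> Cons \<open>\<not> dd ((x # xs) @ ys)\<close> by simp
      qed
      then show ?thesis using \<open>xs = y # zs\<close> Cons by auto
    qed
  qed
  then show ?case using IH by simp
qed

lemma desl_snoc_split: "desl (xs @ y # ys) = desl (xs @ [y]) + desl (y # ys)"
proof (induction xs rule: desl.induct)
  case (1 a b t)
  then show ?case by simp
next
  case ("2_1") then show ?case by simp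
next
  case ("2_2" a) then show ?case by (cases ys) auto
qed

lemma desl_snoc_big: "\<forall>v\<in>set xs. v < N \<Longrightarrow> desl (xs @ [N]) = desl xs"
  by (induction xs rule: desl.induct) auto

lemma desl_append2: "xs \<noteq> [] \<Longrightarrow> ys \<noteq> [] \<Longrightarrow>
  desl (xs @ ys) = desl xs + (if last xs > hd ys then 1 else 0) + desl ys"
proof (induction xs rule: desl.induct)
  case (1 a b t)
  then show ?case by simp
next
  case ("2_1") then show ?case by simp
next
  case ("2_2" a) then show ?case by (cases ys) auto
qed

lemma desl_ins:
  assumes "\<forall>v\<in>set (xs @ ys). v < N"
  shows "desl (xs @ N # ys) = desl (xs @ ys) + (if ys \<noteq> [] \<and> (xs = [] \<or> \<not> last xs > hd ys) then 1 else 0)"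
proof -
  have A: "\<forall>v\<in>set xs. v < N" "\<forall>v\<in>set ys. v < N" using assms by auto
  have s: "desl (xs @ N # ys) = desl xs + desl (N # ys)"
    using desl_snoc_split[of xs N ys] desl_snoc_big[OF A(1)] by simp
  show ?thesis
  proof (cases ys)
    case Nil then show ?thesis using s by simp
  next
    case (Cons b t)
    have "desl (N # ys) = 1 + desl ys" using Cons A(2) by simp
    moreover have "desl (xs @ ys) = desl xs + (if xs \<noteq> [] \<and> last xs > hd ys then 1 else 0) + desl ys"
      using desl_append2[of xs ys] Cons by (cases "xs = []") auto
    ultimately show ?thesis using s Cons by auto
  qed
qed

lemma desl_card: "desl w = card {i. Suc i < length w \<and> w ! i > w ! Suc i}"
proof (induction w rule: desl.induct)
  case (1 a b t)
  have e: "{i. Suc i < length (a # b # t) \<and> (a # b # t) ! i > (a # b # t) ! Suc i}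
    = (if a > b then {0} else {}) \<union> Suc ` {i. Suc i < length (b # t) \<and> (b # t) ! i > (b # t) ! Suc i}"
  proof (rule set_eqI)
    fix i show "i \<in> {i. Suc i < length (a # b # t) \<and> (a # b # t) ! i > (a # b # t) ! Suc i} \<longleftrightarrow>
      i \<in> (if a > b then {0} else {}) \<union> Suc ` {i. Suc i < length (b # t) \<and> (b # t) ! i > (b # t) ! Suc i}"
      by (cases i) auto
  qed
  have fin: "finite {i. Suc i < length (b # t) \<and> (b # t) ! i > (b # t) ! Suc i}" by simp
  have "card (Suc ` {i. Suc i < length (b # t) \<and> (b # t) ! i > (b # t) ! Suc i})
    = card {i. Suc i < length (b # t) \<and> (b # t) ! i > (b # t) ! Suc i}" by (simp add: card_image)
  then show ?case using 1 fin unfolding e by (auto simp: card_insert_if)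
qed auto

definition simsun_l :: "nat \<Rightarrow> nat list \<Rightarrow> bool" where
  "simsun_l n w \<longleftrightarrow> (\<forall>k\<in>{1..n}. \<not> dd (filter (\<lambda>v. v \<le> k) w))"

definition LW :: "nat \<Rightarrow> nat list set" where
  "LW n = {w\<in>permutations_of_set {1..n}. simsun_l n w}"

lemma nth_oneline: "i < n \<Longrightarrow> oneline n p ! i = p (Suc i)"
  by (simp add: oneline_def del: upt_Suc)

lemma length_oneline[simp]: "length (oneline n p) = n"
  by (simp add: oneline_def)

lemma oneline_inj: "inj_on (oneline n) {p. p permutes {1..n}}"
proof (rule inj_onI)
  fix p q assume p: "p \<in> {p. p permutes {1..n}}" and q: "q \<in> {p. p permutes {1..n}}"
    and e: "oneline n p = oneline n q"
  show "p = q"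
  proof
    fix x
    show "p x = q x"
    proof (cases "x \<in> {1..n}")
      case True
      then obtain i where "x = Suc i" "i < n" by (cases x) auto
      then show ?thesis using e nth_oneline[of i n p] nth_oneline[of i n q] by metis
    next
      case False
      then show ?thesis using p q by (simp add: permutes_not_in)
    qed
  qed
qed

lemma oneline_img: "oneline n ` {p. p permutes {1..n}} = permutations_of_set {1..n}"
proof (rule card_subset_eq)
  show "finite (permutations_of_set {1..n})" by simp
  show "oneline n ` {p. p permutes {1..n}} \<subseteq> permutations_of_set {1..n}"
  proof
    fix w assume "w \<in> oneline n ` {p. p permutes {1..n}}"
    then obtain p where p: "p permutes {1..n}" "w = oneline n p" by blast
    have "set w = p ` {1..n}" using p by (simp add: oneline_def atLeastLessThanSuc_atLeastAtMost del: upt_Suc)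
    also have "\<dots> = {1..n}" using permutes_image[OF p(1)] .
    finally have "set w = {1..n}" .
    moreover have "distinct w" using p permutes_inj_on[OF p(1)]
      by (simp add: oneline_def distinct_map atLeastLessThanSuc_atLeastAtMost del: upt_Suc)
    ultimately show "w \<in> permutations_of_set {1..n}" by (rule permutations_of_setI)
  qed
  show "card (oneline n ` {p. p permutes {1..n}}) = card (permutations_of_set {1..n})"
    unfolding card_image[OF oneline_inj] using card_permutations[of "{1..n}" n] by simp
qed

lemma des_oneline:
  assumes "p permutes {1..n}"
  shows "des n p = desl (oneline n p)"
proof -
  have "{i\<in>{1..n-1}. p i > p (i+1)} = Suc ` {i. Suc i < length (oneline n p) \<and> oneline n p ! i > oneline n p ! Suc i}"
  proof (rule set_eqI)
    fix x
    show "x \<in> {i\<in>{1..n-1}. p i > p (i+1)} \<longleftrightarrow> x \<in> Suc ` {i. Suc i < length (oneline n p) \<and> oneline n p ! i > oneline n p ! Suc i}"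
    proof
      assume "x \<in> {i\<in>{1..n-1}. p i > p (i+1)}"
      then obtain i where "x = Suc i" "Suc i < n" "p (Suc i) > p (Suc (Suc i))" by (cases x) auto
      then show "x \<in> Suc ` {i. Suc i < length (oneline n p) \<and> oneline n p ! i > oneline n p ! Suc i}"
        by (auto simp: nth_oneline)
    next
      assume "x \<in> Suc ` {i. Suc i < length (oneline n p) \<and> oneline n p ! i > oneline n p ! Suc i}"
      then obtain i where "x = Suc i" "Suc i < n" "oneline n p ! i > oneline n p ! Suc i" by auto
      then show "x \<in> {i\<in>{1..n-1}. p i > p (i+1)}" by (auto simp: nth_oneline)
    qed
  qed
  then show ?thesis unfolding des_def desl_card by (simp add: card_image)
qed

lemma S1_LW: "S1 n = (\<Sum>w\<in>LW n. monom 1 (desl w))"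
proof -
  have RS: "RS n = {p. p permutes {1..n} \<and> simsun_l n (oneline n p)}"
    by (simp add: RS_def simsun_l_def hdd_dd)
  have img: "oneline n ` RS n = LW n"
  proof
    show "oneline n ` RS n \<subseteq> LW n" using oneline_img unfolding RS LW_def by blast
    show "LW n \<subseteq> oneline n ` RS n"
    proof
      fix w assume "w \<in> LW n"
      then have w: "w \<in> permutations_of_set {1..n}" "simsun_l n w" by (auto simp: LW_def)
      then obtain p where "p permutes {1..n}" "w = oneline n p" using oneline_img by blast
      then show "w \<in> oneline n ` RS n" using w unfolding RS by blast
    qed
  qed
  have inj: "inj_on (oneline n) (RS n)" by (rule inj_on_subset[OF oneline_inj]) (auto simp: RS_def)
  have "S1 n = (\<Sum>p\<in>RS n. monom 1 (desl (oneline n p)))"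
    unfolding S1_def by (rule sum.cong[OF refl]) (simp add: des_oneline RS_def)
  also have "\<dots> = (\<Sum>w\<in>oneline n ` RS n. monom 1 (desl w))"
    by (rule sum.reindex[OF inj, symmetric, unfolded comp_def])
  finally show ?thesis unfolding img .
qed

definition insl :: "nat list \<Rightarrow> nat \<Rightarrow> nat \<Rightarrow> nat list" where
  "insl w j N = take j w @ N # drop j w"

definition Al :: "nat \<Rightarrow> nat list \<Rightarrow> nat set" where
  "Al n w = {j. j \<le> n \<and> \<not> (Suc j < n \<and> w ! j > w ! Suc j)}"

lemma PL_len: "w \<in> permutations_of_set {1..n} \<Longrightarrow> length w = n"
  using length_finite_permutations_of_set by fastforce

lemma filter_ins: "k < N \<Longrightarrow> filter (\<lambda>v. v \<le> k) (insl w j N) = filter (\<lambda>v. v \<le> k) w"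
proof -
  assume "k < N"
  then have "filter (\<lambda>v. v \<le> k) (insl w j N) = filter (\<lambda>v. v \<le> k) (take j w) @ filter (\<lambda>v. v \<le> k) (drop j w)"
    by (simp add: insl_def)
  then show ?thesis by (metis append_take_drop_id filter_append)
qed

lemma simsun_nodd:
  assumes "w \<in> permutations_of_set {1..n}" "simsun_l n w"
  shows "\<not> dd w"
proof (cases "n = 0")
  case True then show ?thesis using PL_len[OF assms(1)] by simp
next
  case False
  then have "\<not> dd (filter (\<lambda>v. v \<le> n) w)" using assms(2) by (auto simp: simsun_l_def)
  moreover have "filter (\<lambda>v. v \<le> n) w = w"
    using permutations_of_setD(1)[OF assms(1)] by (auto intro: filter_True)
  ultimately show ?thesis by simp
qed

lemma simsun_l_ins:
  assumes w: "w \<in> permutations_of_set {1..n}"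
  shows "simsun_l (Suc n) (insl w j (Suc n)) \<longleftrightarrow> simsun_l n w \<and> \<not> dd (insl w j (Suc n))"
proof -
  have sw: "set w = {1..n}" using permutations_of_setD(1)[OF w] .
  have top: "filter (\<lambda>v. v \<le> Suc n) (insl w j (Suc n)) = insl w j (Suc n)"
  proof (rule filter_True)
    show "\<forall>x\<in>set (insl w j (Suc n)). x \<le> Suc n"
      using sw set_take_subset[of j w] set_drop_subset[of j w] by (auto simp: insl_def)
  qed
  have low: "filter (\<lambda>v. v \<le> k) (insl w j (Suc n)) = filter (\<lambda>v. v \<le> k) w" if "k \<le> n" for k
    using that by (intro filter_ins) simp
  have "simsun_l (Suc n) (insl w j (Suc n)) \<longleftrightarrow>
      (\<forall>k\<in>{1..n}. \<not> dd (filter (\<lambda>v. v \<le> k) (insl w j (Suc n)))) \<and> \<not> dd (filter (\<lambda>v. v \<le> Suc n) (insl w j (Suc n)))"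
    unfolding simsun_l_def by (auto simp: atLeastAtMostSuc_conv)
  also have "\<dots> \<longleftrightarrow> simsun_l n w \<and> \<not> dd (insl w j (Suc n))"
    unfolding top simsun_l_def using low by auto
  finally show ?thesis .
qed

lemma dd_insl:
  assumes w: "w \<in> permutations_of_set {1..n}" and nd: "\<not> dd w"
  shows "dd (insl w j (Suc n)) \<longleftrightarrow> (Suc j < n \<and> w ! j > w ! Suc j)"
proof -
  have sw: "set w = {1..n}" using permutations_of_setD(1)[OF w] .
  have len: "length w = n" using PL_len[OF w] .
  have lt: "\<forall>v\<in>set (take j w @ drop j w). v < Suc n" using sw by auto
  have "dd (insl w j (Suc n)) \<longleftrightarrow> (\<exists>a b t. drop j w = a # b # t \<and> a > b)"
    unfolding insl_def by (rule dd_ins[OF lt]) (use nd in simp)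
  also have "\<dots> \<longleftrightarrow> (Suc j < n \<and> w ! j > w ! Suc j)"
  proof (cases "Suc j < n")
    case True
    then have "drop j w = w ! j # w ! Suc j # drop (Suc (Suc j)) w"
      using len by (simp add: Cons_nth_drop_Suc)
    then show ?thesis using True by auto
  next
    case False
    then have l1: "length (drop j w) \<le> 1" using len by simp
    have "\<not>(\<exists>a b t. drop j w = a # b # t)"
    proof clarify
      fix a b t assume "drop j w = a # b # t"
      then have "length (drop j w) = Suc (Suc (length t))" by simp
      then show False using l1 by simp
    qed
    then show ?thesis using False by auto
  qed
  finally show ?thesis .
qed

lemma insl_PL:
  assumes w: "w \<in> permutations_of_set {1..n}" and j: "j \<le> n"
  shows "insl w j (Suc n) \<in> permutations_of_set {1..Suc n}"
proof
  have sw: "set w = {1..n}" "distinct w" using permutations_of_setD[OF w] by auto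
  have td: "set (take j w) \<union> set (drop j w) = set w" by (metis append_take_drop_id set_append)
  have "set (insl w j (Suc n)) = insert (Suc n) (set w)"
    using td by (auto simp: insl_def)
  then show "set (insl w j (Suc n)) = {1..Suc n}" using sw by (auto simp: atLeastAtMostSuc_conv)
  have d1: "distinct (take j w)" "distinct (drop j w)" "set (take j w) \<inter> set (drop j w) = {}"
    using sw(2) by (metis append_take_drop_id distinct_append)+
  have nw: "Suc n \<notin> set w" using sw by simp
  have "Suc n \<notin> set (take j w)" "Suc n \<notin> set (drop j w)" using nw td by blast+
  then show "distinct (insl w j (Suc n))" using d1 by (auto simp: insl_def)
qed

lemma insl_LW:
  assumes w: "w \<in> LW n" and j: "j \<in> Al n w"
  shows "insl w j (Suc n) \<in> LW (Suc n)"
proof -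
  have w1: "w \<in> permutations_of_set {1..n}" "simsun_l n w" using w by (auto simp: LW_def)
  have jn: "j \<le> n" using j by (auto simp: Al_def)
  have "\<not> dd (insl w j (Suc n))"
    using dd_insl[OF w1(1) simsun_nodd[OF w1]] j by (auto simp: Al_def)
  then show ?thesis using simsun_l_ins[OF w1(1)] w1 insl_PL[OF w1(1) jn] by (simp add: LW_def)
qed

lemma LW_surj:
  assumes w': "w' \<in> LW (Suc n)"
  shows "w' \<in> (\<lambda>(w,j). insl w j (Suc n)) ` (SIGMA w:LW n. Al n w)"
proof -
  have w'1: "w' \<in> permutations_of_set {1..Suc n}" "simsun_l (Suc n) w'" using w' by (auto simp: LW_def)
  have s: "set w' = {1..Suc n}" "distinct w'" using permutations_of_setD[OF w'1(1)] by auto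
  then have "Suc n \<in> set w'" by simp
  then obtain xs ys where xy: "w' = xs @ Suc n # ys" by (meson split_list)
  define w where "w = xs @ ys"
  define j where "j = length xs"
  have nin: "Suc n \<notin> set xs" "Suc n \<notin> set ys" using s(2) xy by auto
  have sw: "set w = {1..n}"
  proof -
    have "insert (Suc n) (set w) = {1..Suc n}" using s(1) xy by (auto simp: w_def)
    moreover have "Suc n \<notin> set w" using nin by (simp add: w_def)
    moreover have "Suc n \<notin> {1..n}" by simp
    ultimately show ?thesis by (metis Diff_insert_absorb atLeastAtMostSuc_conv le_add1 plus_1_eq_Suc)
  qed
  have dw: "distinct w" using s(2) xy by (simp add: w_def)
  have wP: "w \<in> permutations_of_set {1..n}" using sw dw by (rule permutations_of_setI)
  have ie: "insl w j (Suc n) = w'" by (simp add: insl_def w_def j_def xy)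
  have len: "length w = n" using PL_len[OF wP] .
  have jn: "j \<le> n" using len by (simp add: w_def j_def)
  have ss: "simsun_l n w \<and> \<not> dd w'" using simsun_l_ins[OF wP, of j] ie w'1(2) by simp
  have "\<not> (Suc j < n \<and> w ! j > w ! Suc j)"
    using dd_insl[OF wP simsun_nodd[OF wP conjunct1[OF ss]], of j] ie ss by simp
  then have "j \<in> Al n w" using jn by (simp add: Al_def)
  moreover have "w \<in> LW n" using wP ss by (simp add: LW_def)
  ultimately show ?thesis using ie by (auto intro!: image_eqI[of _ _ "(w, j)"])
qed

lemma LW_inj: "inj_on (\<lambda>(w,j). insl w j (Suc n)) (SIGMA w:LW n. Al n w)"
proof (rule inj_onI, clarify)
  fix w j w' j'
  assume a: "w \<in> LW n" "j \<in> Al n w" "w' \<in> LW n" "j' \<in> Al n w'"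
    and e: "insl w j (Suc n) = insl w' j' (Suc n)"
  have sw: "set w = {1..n}" "set w' = {1..n}" using a by (auto simp: LW_def permutations_of_set_def)
  have len: "length w = n" "length w' = n" using a PL_len by (auto simp: LW_def)
  have jn: "j \<le> n" "j' \<le> n" using a by (auto simp: Al_def)
  have tw: "takeWhile (\<lambda>x. x \<noteq> Suc n) (insl v i (Suc n)) = take i v" if "set v = {1..n}" for v i
  proof -
    have "\<forall>x\<in>set (take i v). x \<noteq> Suc n" using that set_take_subset[of i v] by auto
    then show ?thesis by (simp add: insl_def takeWhile_append2)
  qed
  have "take j w = take j' w'" using tw[OF sw(1), of j] tw[OF sw(2), of j'] e by simp
  then have jj: "j = j'" using len jn by (metis length_take min.absorb2)
  have rm: "filter (\<lambda>x. x \<noteq> Suc n) (insl v i (Suc n)) = v" if "set v = {1..n}" for v i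
  proof -
    have "filter (\<lambda>x. x \<noteq> Suc n) (insl v i (Suc n)) = filter (\<lambda>x. x \<noteq> Suc n) (take i v) @ filter (\<lambda>x. x \<noteq> Suc n) (drop i v)"
      by (simp add: insl_def)
    also have "\<dots> = filter (\<lambda>x. x \<noteq> Suc n) (take i v @ drop i v)" by (simp only: filter_append)
    also have "\<dots> = v" using that by (auto intro: filter_True)
    finally show ?thesis .
  qed
  have "w = w'" using rm[OF sw(1), of j] rm[OF sw(2), of j'] e by simp
  then show "w = w' \<and> j = j'" using jj by simp
qed

lemma desl_insl:
  assumes w: "w \<in> permutations_of_set {1..n}" and j: "j \<le> n"
  shows "desl (insl w j (Suc n)) = desl w + (if j < n \<and> (j = 0 \<or> \<not> w ! (j - 1) > w ! j) then 1 else 0)"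
proof -
  have sw: "set w = {1..n}" using permutations_of_setD(1)[OF w] .
  have len: "length w = n" using PL_len[OF w] .
  have lt: "\<forall>v\<in>set (take j w @ drop j w). v < Suc n" using sw by auto
  have e: "desl (insl w j (Suc n)) = desl w + (if drop j w \<noteq> [] \<and> (take j w = [] \<or> \<not> last (take j w) > hd (drop j w)) then 1 else 0)"
    unfolding insl_def using desl_ins[OF lt] by simp
  have c1: "drop j w \<noteq> [] \<longleftrightarrow> j < n" using len by auto
  have c2: "take j w = [] \<longleftrightarrow> j = 0" using len j by auto
  have c3: "last (take j w) = w ! (j - 1)" if "0 < j" using that j len
  proof -
    have "take j w = take (j - 1) w @ [w ! (j - 1)]"
      using that j len take_Suc_conv_app_nth[of "j - 1" w] by simp
    then show ?thesis by (metis last_snoc)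
  qed
  have c4: "hd (drop j w) = w ! j" if "j < n" using that len by (simp add: hd_drop_conv_nth)
  show ?thesis unfolding e using c1 c2 c3 c4 by auto
qed

lemma card_split2: "finite S \<Longrightarrow> card {x\<in>S. P x} + card {x\<in>S. \<not> P x} = card S"
proof -
  assume f: "finite S"
  have "S = {x\<in>S. P x} \<union> {x\<in>S. \<not> P x}" by auto
  then have "card S = card ({x\<in>S. P x} \<union> {x\<in>S. \<not> P x})" by simp
  also have "\<dots> = card {x\<in>S. P x} + card {x\<in>S. \<not> P x}"
    by (rule card_Un_disjoint) (use f in auto)
  finally show ?thesis by simp
qed

lemma counting1:
  assumes w: "w \<in> LW n"
  defines "P \<equiv> \<lambda>j. j < n \<and> (j = 0 \<or> \<not> w ! (j - 1) > w ! j)"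
  shows "card {j\<in>Al n w. \<not> P j} = desl w + 1" "card {j\<in>Al n w. P j} = n - 2 * desl w"
    "2 * desl w \<le> n"
proof -
  have wP: "w \<in> permutations_of_set {1..n}" and ss: "simsun_l n w" using w by (auto simp: LW_def)
  have len: "length w = n" using PL_len[OF wP] .
  have nd: "\<not> has_double_descent w" using simsun_nodd[OF wP ss] hdd_dd by simp
  define D where "D = {i. Suc i < n \<and> w ! i > w ! Suc i}"
  have d: "desl w = card D" unfolding D_def desl_card len ..
  have finD: "finite D" unfolding D_def by (rule finite_subset[of _ "{..<n}"]) auto
  have Aleq: "Al n w = {..n} - D" by (auto simp: Al_def D_def)
  have Dsub: "D \<subseteq> {..n}" by (auto simp: D_def)
  have cA: "card (Al n w) = Suc n - desl w"
    unfolding Aleq d by (simp add: card_Diff_subset[OF finD Dsub])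
  have Z: "{j\<in>Al n w. \<not> P j} = insert n (Suc ` D)"
  proof (rule set_eqI)
    fix j
    show "j \<in> {j\<in>Al n w. \<not> P j} \<longleftrightarrow> j \<in> insert n (Suc ` D)"
    proof
      assume "j \<in> {j\<in>Al n w. \<not> P j}"
      then have j: "j \<le> n" "\<not> P j" by (auto simp: Al_def)
      show "j \<in> insert n (Suc ` D)"
      proof (cases "j = n")
        case False
        then have "j < n" "j \<noteq> 0" "w ! (j - 1) > w ! j" using j by (auto simp: P_def)
        then obtain i where "j = Suc i" "Suc i < n" "w ! i > w ! Suc i" by (cases j) auto
        then show ?thesis by (auto simp: D_def)
      qed simp
    next
      assume "j \<in> insert n (Suc ` D)"
      then show "j \<in> {j\<in>Al n w. \<not> P j}"
      proof
        assume "j = n" then show ?thesis by (simp add: Al_def P_def)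
      next
        assume "j \<in> Suc ` D"
        then obtain i where i: "j = Suc i" "Suc i < n" "w ! i > w ! Suc i" by (auto simp: D_def)
        have "\<not> (Suc (Suc i) < n \<and> w ! Suc i > w ! Suc (Suc i))"
        proof
          assume "Suc (Suc i) < n \<and> w ! Suc i > w ! Suc (Suc i)"
          then have "has_double_descent w" using i len unfolding has_double_descent_def
            by (intro exI[of _ i]) simp
          then show False using nd by simp
        qed
        then show ?thesis using i by (auto simp: Al_def P_def)
      qed
    qed
  qed
  have "n \<notin> Suc ` D" by (auto simp: D_def)
  then have cZ: "card {j\<in>Al n w. \<not> P j} = Suc (card D)"
    unfolding Z using finD by (simp add: card_image)
  then show "card {j\<in>Al n w. \<not> P j} = desl w + 1" using d by simp
  have finA: "finite (Al n w)" by (simp add: Al_def)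
  have "card {j\<in>Al n w. P j} + card {j\<in>Al n w. \<not> P j} = card (Al n w)"
    using card_split2[OF finA] .
  then show "card {j\<in>Al n w. P j} = n - 2 * desl w" "2 * desl w \<le> n" using cA cZ d by auto
qed

lemma pderiv_sum': "pderiv (\<Sum>x\<in>A. f x) = (\<Sum>x\<in>A. pderiv (f x))"
  using higher_pderiv_sum[of 1 f A] by simp

lemma lin_monom: "[:a, b:] * monom c k = monom (a*c) k + monom (b*c) (Suc k)"
  by (rule poly_eqI) (simp add: coeff_monom coeff_pCons mult_pCons_left split: nat.splits)

lemma quad_monom': "[:0, a, b:] * monom c k = monom (a*c) (Suc k) + monom (b*c) (Suc (Suc k))"
  by (rule poly_eqI) (simp add: coeff_monom coeff_pCons mult_pCons_left split: nat.splits)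

lemma key_alg1:
  assumes "2 * d \<le> n"
  shows "[:1, of_nat n:] * monom (1::real) d + [:0,1,-2:] * pderiv (monom 1 d)
    = of_nat (d+1) * monom 1 d + of_nat (n - 2*d) * monom 1 (Suc d)"
proof -
  have a: "[:1, of_nat n:] * monom (1::real) d = monom 1 d + monom (of_nat n) (Suc d)"
    by (simp only: lin_monom) simp
  have b: "[:0,1,-2:] * pderiv (monom (1::real) d) = monom (of_nat d) d + monom (- 2 * of_nat d) (Suc d)"
  proof (cases d)
    case 0 then show ?thesis by (simp add: pderiv_monom)
  next
    case (Suc d')
    have "pderiv (monom (1::real) d) = monom (of_nat d) d'" using Suc by (simp add: pderiv_monom)
    then have "[:0,1,-2:] * pderiv (monom (1::real) d) = monom (1 * of_nat d) (Suc d') + monom (-2 * of_nat d) (Suc (Suc d'))"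
      by (simp only: quad_monom')
    then show ?thesis using Suc by simp
  qed
  have c: "monom (of_nat n) (Suc d) + monom (- 2 * of_nat d) (Suc d) = monom (of_nat (n - 2*d) :: real) (Suc d)"
    using assms by (simp only: add_monom of_nat_diff) (simp add: of_nat_diff)
  have "of_nat k * monom (1::real) j = monom (of_nat k) j" for k j
    by (simp add: of_nat_poly mult_pCons_left smult_monom)
  note h = this
  have h2: "of_nat (d+1) * monom (1::real) d = monom 1 d + monom (of_nat d) d"
    by (simp only: h add_monom) simp
  have r: "of_nat (d+1) * monom (1::real) d + of_nat (n - 2*d) * monom 1 (Suc d)
      = monom 1 d + monom (of_nat d) d + monom (of_nat (n - 2*d)) (Suc d)"
    unfolding h2 by (simp only: h)
  show ?thesis unfolding r a b c[symmetric] by (simp add: algebra_simps)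
qed

lemma LW_finite: "finite (LW n)"
  by (rule finite_subset[of _ "permutations_of_set {1..n}"]) (auto simp: LW_def)

theorem S1_rec: "S1 (Suc n) = [:1, of_nat n:] * S1 n + [:0,1,-2:] * pderiv (S1 n)"
proof -
  let ?f = "\<lambda>(w,j). insl w j (Suc n)"
  let ?D = "SIGMA w:LW n. Al n w"
  have img: "LW (Suc n) = ?f ` ?D"
  proof
    show "LW (Suc n) \<subseteq> ?f ` ?D" using LW_surj by blast
    show "?f ` ?D \<subseteq> LW (Suc n)" using insl_LW by auto
  qed
  have inner: "(\<Sum>j\<in>Al n w. monom (1::real) (desl (insl w j (Suc n))))
      = [:1, of_nat n:] * monom 1 (desl w) + [:0,1,-2:] * pderiv (monom 1 (desl w))" if w: "w \<in> LW n" for w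
  proof -
    define P where "P = (\<lambda>j. j < n \<and> (j = 0 \<or> \<not> w ! (j - 1) > w ! j))"
    have cnt1: "card {j\<in>Al n w. \<not> P j} = desl w + 1" "card {j\<in>Al n w. P j} = n - 2 * desl w"
      "2 * desl w \<le> n" using counting1[OF w] unfolding P_def by simp_all
    note cnt = cnt1
    have wP: "w \<in> permutations_of_set {1..n}" using w by (auto simp: LW_def)
    have finA: "finite (Al n w)" by (simp add: Al_def)
    have "(\<Sum>j\<in>Al n w. monom (1::real) (desl (insl w j (Suc n))))
        = (\<Sum>j\<in>Al n w. if P j then monom 1 (Suc (desl w)) else monom 1 (desl w))"
    proof (rule sum.cong[OF refl])
      fix j assume "j \<in> Al n w"
      then have "j \<le> n" by (simp add: Al_def)
      then show "monom (1::real) (desl (insl w j (Suc n))) = (if P j then monom 1 (Suc (desl w)) else monom 1 (desl w))"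
        using desl_insl[OF wP] by (simp add: P_def)
    qed
    also have "\<dots> = (\<Sum>j\<in>Al n w \<inter> {j. P j}. monom 1 (Suc (desl w))) + (\<Sum>j\<in>Al n w \<inter> - {j. P j}. monom 1 (desl w))"
      by (rule sum.If_cases[OF finA])
    also have "Al n w \<inter> {j. P j} = {j\<in>Al n w. P j}" by auto
    also have "Al n w \<inter> - {j. P j} = {j\<in>Al n w. \<not> P j}" by auto
    finally have "(\<Sum>j\<in>Al n w. monom (1::real) (desl (insl w j (Suc n))))
        = of_nat (n - 2 * desl w) * monom 1 (Suc (desl w)) + of_nat (desl w + 1) * monom 1 (desl w)"
      by (simp add: cnt)
    then show ?thesis using key_alg1[OF cnt(3)] by (simp add: add.commute)
  qed
  have "S1 (Suc n) = (\<Sum>w'\<in>?f ` ?D. monom 1 (desl w'))" unfolding S1_LW img ..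
  also have "\<dots> = (\<Sum>x\<in>?D. monom 1 (desl (?f x)))"
    by (rule sum.reindex[OF LW_inj, unfolded comp_def])
  also have "\<dots> = (\<Sum>w\<in>LW n. \<Sum>j\<in>Al n w. monom (1::real) (desl (insl w j (Suc n))))"
    by (subst sum.Sigma) (simp_all add: LW_finite Al_def split_def)
  also have "\<dots> = (\<Sum>w\<in>LW n. [:1, of_nat n:] * monom 1 (desl w) + [:0,1,-2:] * pderiv (monom 1 (desl w)))"
    by (rule sum.cong[OF refl inner])
  also have "\<dots> = [:1, of_nat n:] * S1 n + [:0,1,-2:] * pderiv (S1 n)"
    unfolding S1_LW by (simp add: sum.distrib sum_distrib_left pderiv_sum')
  finally show ?thesis .
qed


lemma S1_0: "S1 0 = 1"
proof -
  have "RS 0 = {id}" by (auto simp: RS_def oneline_def has_double_descent_def)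
  then show ?thesis by (simp add: S1_def des_def)
qed

lemma S2_0: "S2 0 = 1"
proof -
  have "SS 0 = {id}" by (auto simp: SS_def simsun2_def no_double_exc_def)
  then show ?thesis by (simp add: S2_def exc_def cyc_def)
qed

theorem theorem13:
  shows "S2 0 = 1
    \<and> (\<forall>n. S2 (Suc n) = ([:0, 1:] + [:[:0, of_nat n:]:]) * S2 n
                         + [:[:0, 1, -2:]:] * map_poly pderiv (S2 n))
    \<and> (\<forall>(x::real) (q::real).
         Abs_fps (\<lambda>n. poly (poly (S2 n) [:q:]) x / fact n) = fps_pow_real (S_egf x) q)"
proof -
  have r1: "recur 1 S1" unfolding recur_def Lop_def using S1_rec by simp
  have r2: "\<forall>n. S2 (Suc n) = ([:0, 1:] + [:[:0, of_nat n:]:]) * S2 n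
                         + [:[:0, 1, -2:]:] * map_poly pderiv (S2 n)" using S2_rec by blast
  show ?thesis using S2_0 r2 part_egf[OF S1_0 r1 S2_0 r2] by blast
qed

end
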